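(* Let $P\in\mathcal E_0$ and assume all $\hat f_j,\hat g_l$ are estimated on an auxiliary data set independent of $(\mathbf X^{(n)},\mathbf Y^{(n)},\mathbf Z^{(n)})$. Let $d_X,d_Y$ and all $K(j,l)$ be fixed. Assume there exists $C>0$ with $|w_{jlk}(z)|\le C$ for all $z,j,l,k$. Assume that for all $j,l$: $A_{f,j}A_{g,l}=o_P(n^{-1})$, $B_{f,jl}=o_P(1)$, $B_{g,jl}=o_P(1)$, $\mathbb E_P[\epsilon_{P,j}^2\xi_{P,l}^2w_{jlk}(Z)^2]>0$ for all $k=1,\dots,K(j,l)$, and $\mathbb E_P[\epsilon_{P,j}^2\xi_{P,l}^2]<\infty$. If there exist $j,l$ and $k\in\{1,\dots,K(j,l)\}$ with $\mathbb E_P[\epsilon_{P,j}\xi_{P,l}w_{jlk}(Z)]\ne0$, then $\mathbb P_P(S_n\ge M)\to1$ for all $M>0$.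
   Context: Let $X\in\mathbb R^{d_X}$, $Y\in\mathbb R^{d_Y}$, $Z\in\mathbb R^{d_Z}$ be random vectors; $\mathcal E_0$ is the set of distributions of $(X,Y,Z)$ absolutely continuous with respect to Lebesgue measure. For $P\in\mathcal E_0$: $f_{P,j}(z)=\mathbb E_P[X_j\mid Z=z]$, $g_{P,l}(z)=\mathbb E_P[Y_l\mid Z=z]$, $\epsilon_{P,j}=X_j-f_{P,j}(Z)$, $\xi_{P,l}=Y_l-g_{P,l}(Z)$, $u_{P,j}(z)=\mathbb E_P[\epsilon_{P,j}^2\mid Z=z]$, $v_{P,l}(z)=\mathbb E_P[\xi_{P,l}^2\mid Z=z]$. Data $(x_i,y_i,z_i)$, $i=1,\dots,n$, i.i.d. copies of $(X,Y,Z)$; $\hat f_j,\hat g_l$ estimate $f_{P,j},g_{P,l}$. $A_{f,j}=\frac1n\sum_i(f_{P,j}(z_i)-\hat f_j(z_i))^2$, $A_{g,l}=\frac1n\sum_i(g_{P,l}(z_i)-\hat g_l(z_i))^2$, $B_{f,jl}=\frac1n\sum_i(f_{P,j}(z_i)-\hat f_j(z_i))^2v_{P,l}(z_i)$, $B_{g,jl}=\frac1n\sum_i(g_{P,l}(z_i)-\hat g_l(z_i))^2u_{P,j}(z_i)$. For fixed measurable weight functions $w_{jlk}$, $k=1,\dots,K(j,l)$: $\mathbf R_{jlk}\in\mathbb R^n$ with entries $(x_{ij}-\hat f_j(z_i))(y_{il}-\hat g_l(z_i))w_{jlk}(z_i)$, $\bar{\mathbf R}_{jlk}$ its mean, $T_{jlk}^{(n)}=\sqrt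 n\bar{\mathbf R}_{jlk}/(\frac1n\|\mathbf R_{jlk}\|_2^2-\bar{\mathbf R}_{jlk}^2)^{1/2}$, $S_n=\max_{j,l,k}|T_{jlk}^{(n)}|$. $V_n=o_P(W_n)$ means $\mathbb P_P(|V_n/W_n|>\delta)\to0$ for all $\delta>0$. *)

theory Defs
  imports "HOL-Probability.Probability"
begin

type_synonym ('dx, 'dy, 'dz) obs = "(real^'dx) \<times> (real^'dy) \<times> (real^'dz)"

text \<open>h is a version of the regression function z \<mapsto> E_P[V | Zm = z].\<close>
definition regr_fun :: "'t measure \<Rightarrow> ('t \<Rightarrow> 'z::topological_space) \<Rightarrow> ('t \<Rightarrow> real) \<Rightarrow> ('z \<Rightarrow> real) \<Rightarrow> bool" where
  "regr_fun P Zm V h \<longleftrightarrow> h \<in> borel_measurable borel \<and> integrable P V \<and>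
     integrable P (\<lambda>t. h (Zm t)) \<and>
     (\<forall>A\<in>sets borel. (\<integral>t. indicator A (Zm t) * V t \<partial>P) = (\<integral>t. indicator A (Zm t) * h (Zm t) \<partial>P))"

definition nn_regr_fun :: "'t measure \<Rightarrow> ('t \<Rightarrow> 'z::topological_space) \<Rightarrow> ('t \<Rightarrow> real) \<Rightarrow> ('z \<Rightarrow> real) \<Rightarrow> bool" where
  "nn_regr_fun P Zm V h \<longleftrightarrow> h \<in> borel_measurable borel \<and> (\<forall>z. 0 \<le> h z) \<and>
     (\<forall>A\<in>sets borel. (\<integral>\<^sup>+t. indicator A (Zm t) * ennreal (V t) \<partial>P) = (\<integral>\<^sup>+t. indicator A (Zm t) * ennreal (h (Zm t)) \<partial>P))"

definition oP :: "'o measure \<Rightarrow> (nat \<Rightarrow> 'o \<Rightarrow> real) \<Rightarrow> (nat \<Rightarrow> real) \<Rightarrow> bool" where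
  "oP M V w \<longleftrightarrow> (\<forall>\<delta>>0. (\<lambda>n. measure M {\<omega>\<in>space M. \<delta> < \<bar>V n \<omega> / w n\<bar>}) \<longlonglongrightarrow> 0)"

text \<open>Sample quantities; the sample of size n is dat 0, ..., dat (n-1).\<close>
definition Aerr :: "nat \<Rightarrow> ('z \<Rightarrow> real) \<Rightarrow> ('z \<Rightarrow> real) \<Rightarrow> (nat \<Rightarrow> 'z) \<Rightarrow> real" where
  "Aerr n f fh zs = (\<Sum>i<n. (f (zs i) - fh (zs i))^2) / real n"

definition Berr :: "nat \<Rightarrow> ('z \<Rightarrow> real) \<Rightarrow> ('z \<Rightarrow> real) \<Rightarrow> ('z \<Rightarrow> real) \<Rightarrow> (nat \<Rightarrow> 'z) \<Rightarrow> real" where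
  "Berr n f fh v zs = (\<Sum>i<n. (f (zs i) - fh (zs i))^2 * v (zs i)) / real n"

definition Rvec :: "(real^'dz::finite \<Rightarrow> real) \<Rightarrow> (real^'dz \<Rightarrow> real) \<Rightarrow> (real^'dz \<Rightarrow> real) \<Rightarrow> 'dx::finite \<Rightarrow> 'dy::finite
     \<Rightarrow> (nat \<Rightarrow> ('dx, 'dy, 'dz) obs) \<Rightarrow> nat \<Rightarrow> real" where
  "Rvec fh gh wt j l dat i =
     (fst (dat i) $ j - fh (snd (snd (dat i)))) * (fst (snd (dat i)) $ l - gh (snd (snd (dat i))))
       * wt (snd (snd (dat i)))"

definition Rbar :: "nat \<Rightarrow> (nat \<Rightarrow> real) \<Rightarrow> real" where
  "Rbar n r = (\<Sum>i<n. r i) / real n"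

definition Tstat :: "nat \<Rightarrow> (nat \<Rightarrow> real) \<Rightarrow> real" where
  "Tstat n r = sqrt (real n) * Rbar n r / sqrt ((\<Sum>i<n. (r i)^2) / real n - (Rbar n r)^2)"

definition Sstat :: "nat \<Rightarrow> ('dx::finite \<Rightarrow> 'dy::finite \<Rightarrow> nat \<Rightarrow> real^'dz::finite \<Rightarrow> real) \<Rightarrow> ('dx \<Rightarrow> 'dy \<Rightarrow> nat)
     \<Rightarrow> ('dx \<Rightarrow> real^'dz \<Rightarrow> real) \<Rightarrow> ('dy \<Rightarrow> real^'dz \<Rightarrow> real)
     \<Rightarrow> (nat \<Rightarrow> ('dx, 'dy, 'dz) obs) \<Rightarrow> real" where
  "Sstat n w K fh gh dat =
     Max {\<bar>Tstat n (Rvec (fh j) (gh l) (w j l k) j l dat)\<bar> | j l k. k \<in> {1..K j l}}"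

end

theory Submission
  imports Defs
begin

lemma nn_tower:
  fixes Zm :: "'t \<Rightarrow> 'z::topological_space"
  assumes nr: "nn_regr_fun P Zm V q"
    and Zm[measurable]: "Zm \<in> measurable P borel" and V[measurable]: "V \<in> borel_measurable P"
    and h[measurable]: "h \<in> borel_measurable (borel :: 'z measure)"
  shows "(\<integral>\<^sup>+t. h (Zm t) * ennreal (V t) \<partial>P) = (\<integral>\<^sup>+t. h (Zm t) * ennreal (q (Zm t)) \<partial>P)"
proof -
  have q[measurable]: "q \<in> borel_measurable borel" using nr unfolding nn_regr_fun_def by auto
  have eqA: "\<And>A. A \<in> sets borel \<Longrightarrow> (\<integral>\<^sup>+t. indicator A (Zm t) * ennreal (V t) \<partial>P) = (\<integral>\<^sup>+t. indicator A (Zm t) * ennreal (q (Zm t)) \<partial>P)"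
    using nr unfolding nn_regr_fun_def by auto
  define N1 where "N1 = distr (density P (\<lambda>t. ennreal (V t))) (borel :: 'z measure) Zm"
  define N2 where "N2 = distr (density P (\<lambda>t. ennreal (q (Zm t)))) (borel :: 'z measure) Zm"
  have "N1 = N2"
  proof (rule measure_eqI)
    show "sets N1 = sets N2" by (simp add: N1_def N2_def)
    fix A assume A: "A \<in> sets N1"
    then have Ab[measurable]: "A \<in> sets borel" by (simp add: N1_def)
    have "emeasure N1 A = (\<integral>\<^sup>+t. ennreal (V t) * indicator (Zm -` A \<inter> space P) t \<partial>P)"
      unfolding N1_def by (simp add: emeasure_distr emeasure_density)
    also have "\<dots> = (\<integral>\<^sup>+t. indicator A (Zm t) * ennreal (V t) \<partial>P)"
      by (intro nn_integral_cong) (auto simp: indicator_def)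
    also have "\<dots> = (\<integral>\<^sup>+t. indicator A (Zm t) * ennreal (q (Zm t)) \<partial>P)" using eqA Ab by simp
    also have "\<dots> = (\<integral>\<^sup>+t. ennreal (q (Zm t)) * indicator (Zm -` A \<inter> space P) t \<partial>P)"
      by (intro nn_integral_cong) (auto simp: indicator_def)
    also have "\<dots> = emeasure N2 A"
      unfolding N2_def by (simp add: emeasure_distr emeasure_density)
    finally show "emeasure N1 A = emeasure N2 A" .
  qed
  have "(\<integral>\<^sup>+t. h (Zm t) * ennreal (V t) \<partial>P) = integral\<^sup>N N1 h"
    unfolding N1_def by (simp add: nn_integral_distr nn_integral_density mult.commute)
  also have "\<dots> = integral\<^sup>N N2 h" using \<open>N1 = N2\<close> by simp
  also have "\<dots> = (\<integral>\<^sup>+t. h (Zm t) * ennreal (q (Zm t)) \<partial>P)"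
    unfolding N2_def by (simp add: nn_integral_distr nn_integral_density mult.commute)
  finally show ?thesis .
qed

lemma integrable_ind_comp:
  fixes V :: "'t \<Rightarrow> real"
  assumes "integrable P V" "Zm \<in> measurable P borel" "A \<in> sets borel"
  shows "integrable P (\<lambda>t. indicator A (Zm t) * V t)"
  by (rule Bochner_Integration.integrable_bound[OF assms(1)]) (use assms in \<open>auto simp: indicator_def\<close>)

lemma mh1: "max (a::real) 0 * \<bar>b\<bar> \<le> \<bar>a\<bar> * \<bar>b\<bar>" by (rule mult_right_mono) auto
lemma mh2: "max (- a::real) 0 * \<bar>b\<bar> \<le> \<bar>a\<bar> * \<bar>b\<bar>" by (rule mult_right_mono) auto
lemma mh: "max (a::real) 0 * \<bar>b\<bar> \<le> \<bar>b\<bar> * \<bar>a\<bar>" "max (- a) 0 * \<bar>b\<bar> \<le> \<bar>b\<bar> * \<bar>a\<bar>"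
   "max (a::real) 0 * \<bar>b\<bar> \<le> \<bar>a\<bar> * \<bar>b\<bar>" "max (- a) 0 * \<bar>b\<bar> \<le> \<bar>a\<bar> * \<bar>b\<bar>"
  using mh1[of a b] mh2[of a b] by (simp_all add: mult.commute)

lemma signed_tower:
  fixes Zm :: "'t \<Rightarrow> 'z::topological_space"
  assumes rf: "regr_fun P Zm V hf"
    and Zm[measurable]: "Zm \<in> measurable P borel" and V[measurable]: "V \<in> borel_measurable P"
    and h[measurable]: "h \<in> borel_measurable (borel :: 'z measure)"
  shows "(\<integral>t. h (Zm t) * (V t - hf (Zm t)) \<partial>P) = 0"
proof -
  have hf[measurable]: "hf \<in> borel_measurable borel" and iV: "integrable P V"
    and ihf: "integrable P (\<lambda>t. hf (Zm t))"
    and eqA: "\<And>A. A \<in> sets borel \<Longrightarrow> (\<integral>t. indicator A (Zm t) * V t \<partial>P) = (\<integral>t. indicator A (Zm t) * hf (Zm t) \<partial>P)"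
    using rf unfolding regr_fun_def by auto
  define r where "r t = V t - hf (Zm t)" for t
  have r[measurable]: "r \<in> borel_measurable P" unfolding r_def by measurable
  have ir: "integrable P r" unfolding r_def using iV ihf by auto
  define rp where "rp t = max (r t) 0" for t
  define rn where "rn t = max (- r t) 0" for t
  have [measurable]: "rp \<in> borel_measurable P" "rn \<in> borel_measurable P" unfolding rp_def rn_def by measurable
  have irp: "integrable P rp" unfolding rp_def using ir by (intro integrable_max) auto
  have irn: "integrable P rn" unfolding rn_def using ir by (intro integrable_max) auto
  have r_split: "r t = rp t - rn t" for t unfolding rp_def rn_def by auto
  have intA: "(\<integral>t. indicator A (Zm t) * r t \<partial>P) = 0" if A[measurable]: "A \<in> sets borel" for A
  proof -
    have "(\<integral>t. indicator A (Zm t) * r t \<partial>P) = (\<integral>t. indicator A (Zm t) * V t - indicator A (Zm t) * hf (Zm t) \<partial>P)"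
      unfolding r_def by (simp add: algebra_simps)
    also have "\<dots> = (\<integral>t. indicator A (Zm t) * V t \<partial>P) - (\<integral>t. indicator A (Zm t) * hf (Zm t) \<partial>P)"
      by (intro Bochner_Integration.integral_diff integrable_ind_comp iV ihf Zm A)
    finally show ?thesis using eqA[OF A] by simp
  qed
  define N1 where "N1 = distr (density P (\<lambda>t. ennreal (rp t))) (borel :: 'z measure) Zm"
  define N2 where "N2 = distr (density P (\<lambda>t. ennreal (rn t))) (borel :: 'z measure) Zm"
  have "N1 = N2"
  proof (rule measure_eqI)
    show "sets N1 = sets N2" by (simp add: N1_def N2_def)
    fix A assume A: "A \<in> sets N1"
    then have Ab[measurable]: "A \<in> sets borel" by (simp add: N1_def)
    have e1: "emeasure N1 A = (\<integral>\<^sup>+t. ennreal (indicator A (Zm t) * rp t) \<partial>P)"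
      unfolding N1_def by (simp add: emeasure_distr emeasure_density, intro nn_integral_cong) (auto simp: indicator_def)
    have e2: "emeasure N2 A = (\<integral>\<^sup>+t. ennreal (indicator A (Zm t) * rn t) \<partial>P)"
      unfolding N2_def by (simp add: emeasure_distr emeasure_density, intro nn_integral_cong) (auto simp: indicator_def)
    have i1: "integrable P (\<lambda>t. indicator A (Zm t) * rp t)" by (intro integrable_ind_comp irp Zm Ab)
    have i2: "integrable P (\<lambda>t. indicator A (Zm t) * rn t)" by (intro integrable_ind_comp irn Zm Ab)
    have "(\<integral>t. indicator A (Zm t) * rp t \<partial>P) - (\<integral>t. indicator A (Zm t) * rn t \<partial>P)
        = (\<integral>t. indicator A (Zm t) * r t \<partial>P)"
      using i1 i2 by (subst Bochner_Integration.integral_diff[symmetric]) (auto simp: r_split algebra_simps)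
    then have "(\<integral>t. indicator A (Zm t) * rp t \<partial>P) = (\<integral>t. indicator A (Zm t) * rn t \<partial>P)"
      using intA[OF Ab] by simp
    then show "emeasure N1 A = emeasure N2 A" unfolding e1 e2
      using i1 i2 by (subst (1 2) nn_integral_eq_integral) (auto simp: rp_def rn_def)
  qed
  show ?thesis
  proof (cases "integrable P (\<lambda>t. h (Zm t) * r t)")
    case False then show ?thesis by (simp add: r_def not_integrable_integral_eq)
  next
    case True
    have ip: "integrable P (\<lambda>t. rp t * h (Zm t))"
      by (rule Bochner_Integration.integrable_bound[OF True]) (auto intro!: AE_I2 simp: rp_def abs_mult mh)
    have in_: "integrable P (\<lambda>t. rn t * h (Zm t))"
      by (rule Bochner_Integration.integrable_bound[OF True]) (auto intro!: AE_I2 simp: rn_def abs_mult mh)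
    have "integral\<^sup>L N1 h = (\<integral>t. h (Zm t) \<partial>density P (\<lambda>t. ennreal (rp t)))"
      unfolding N1_def by (simp add: integral_distr)
    also have "\<dots> = (\<integral>t. rp t *\<^sub>R h (Zm t) \<partial>P)"
      by (rule integral_density) (auto simp: rp_def)
    finally have "(\<integral>t. rp t * h (Zm t) \<partial>P) = integral\<^sup>L N1 h" by simp
    also have "\<dots> = integral\<^sup>L N2 h" using \<open>N1 = N2\<close> by simp
    also have "\<dots> = (\<integral>t. h (Zm t) \<partial>density P (\<lambda>t. ennreal (rn t)))"
      unfolding N2_def by (simp add: integral_distr)
    also have "\<dots> = (\<integral>t. rn t *\<^sub>R h (Zm t) \<partial>P)"
      by (rule integral_density) (auto simp: rn_def)
    finally have "(\<integral>t. rp t * h (Zm t) \<partial>P) = (\<integral>t. rn t * h (Zm t) \<partial>P)" by simp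
    moreover have "(\<integral>t. h (Zm t) * r t \<partial>P) = (\<integral>t. rp t * h (Zm t) \<partial>P) - (\<integral>t. rn t * h (Zm t) \<partial>P)"
      using ip in_ by (subst Bochner_Integration.integral_diff[symmetric]) (auto simp: r_split algebra_simps)
    ultimately show ?thesis by (simp add: r_def)
  qed
qed

lemma upd_meas:
  assumes "finite I" "i \<in> I"
  shows "(\<lambda>p. (snd p)(i := fst p)) \<in> measurable (P \<Otimes>\<^sub>M PiM (I - {i}) (\<lambda>_. P)) (PiM I (\<lambda>_. P))"
  by (rule measurable_fun_upd[where J="I-{i}"]) (use assms in auto)

lemma distr_upd:
  assumes P: "prob_space P" and I: "finite I" "i \<in> I"
  shows "distr (P \<Otimes>\<^sub>M PiM (I - {i}) (\<lambda>_. P)) (PiM I (\<lambda>_. P)) (\<lambda>p. (snd p)(i := fst p)) = PiM I (\<lambda>_. P)"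
proof -
  have ins: "insert i (I - {i}) = I" using I by auto
  have "distr (P \<Otimes>\<^sub>M PiM (I - {i}) (\<lambda>_. P)) (PiM (insert i (I - {i})) (\<lambda>_. P)) (\<lambda>(x, X). X(i := x)) = PiM (insert i (I - {i})) (\<lambda>_. P)"
    by (rule distr_pair_PiM_eq_PiM) (use P in auto)
  then show ?thesis unfolding ins by (simp add: case_prod_beta')
qed

lemma split_nn:
  assumes P: "prob_space P" and I: "finite I" "i \<in> I"
    and F[measurable]: "F \<in> borel_measurable (PiM I (\<lambda>_. P))"
  shows "integral\<^sup>N (PiM I (\<lambda>_. P)) F = (\<integral>\<^sup>+ rest. (\<integral>\<^sup>+ t. F (rest(i:=t)) \<partial>P) \<partial>PiM (I - {i}) (\<lambda>_. P))"
proof -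
  interpret P: prob_space P by fact
  interpret R: prob_space "PiM (I-{i}) (\<lambda>_. P)" by (rule prob_space_PiM) (simp add: P)
  interpret pair_sigma_finite P "PiM (I-{i}) (\<lambda>_. P)" ..
  note m[measurable] = upd_meas[OF I]
  have "integral\<^sup>N (PiM I (\<lambda>_. P)) F = integral\<^sup>N (distr (P \<Otimes>\<^sub>M PiM (I - {i}) (\<lambda>_. P)) (PiM I (\<lambda>_. P)) (\<lambda>p. (snd p)(i := fst p))) F"
    using distr_upd[OF P I] by simp
  also have "\<dots> = (\<integral>\<^sup>+ p. F ((snd p)(i := fst p)) \<partial>(P \<Otimes>\<^sub>M PiM (I - {i}) (\<lambda>_. P)))"
    by (rule nn_integral_distr) measurable
  also have "\<dots> = (\<integral>\<^sup>+ rest. (\<integral>\<^sup>+ t. F (rest(i:=t)) \<partial>P) \<partial>PiM (I - {i}) (\<lambda>_. P))"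
    by (rule nn_integral_snd[symmetric, where f="\<lambda>p. F ((snd p)(i := fst p))", simplified]) measurable
  finally show ?thesis .
qed

lemma split_int:
  fixes F :: "_ \<Rightarrow> real"
  assumes P: "prob_space P" and I: "finite I" "i \<in> I"
    and F: "integrable (PiM I (\<lambda>_. P)) F"
  shows "integral\<^sup>L (PiM I (\<lambda>_. P)) F = (\<integral> rest. (\<integral> t. F (rest(i:=t)) \<partial>P) \<partial>PiM (I - {i}) (\<lambda>_. P))"
proof -
  interpret P: prob_space P by fact
  interpret R: prob_space "PiM (I-{i}) (\<lambda>_. P)" by (rule prob_space_PiM) (simp add: P)
  interpret pair_sigma_finite P "PiM (I-{i}) (\<lambda>_. P)" ..
  note m[measurable] = upd_meas[OF I]
  have D: "distr (P \<Otimes>\<^sub>M PiM (I - {i}) (\<lambda>_. P)) (PiM I (\<lambda>_. P)) (\<lambda>p. (snd p)(i := fst p)) = PiM I (\<lambda>_. P)"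
    using distr_upd[OF P I] by simp
  have Fm[measurable]: "F \<in> borel_measurable (PiM I (\<lambda>_. P))" using F by auto
  have iF: "integrable (P \<Otimes>\<^sub>M PiM (I - {i}) (\<lambda>_. P)) (\<lambda>p. F ((snd p)(i := fst p)))"
  proof -
    have "integrable (distr (P \<Otimes>\<^sub>M PiM (I - {i}) (\<lambda>_. P)) (PiM I (\<lambda>_. P)) (\<lambda>p. (snd p)(i := fst p))) F"
      using F by (simp only: D)
    then show ?thesis by (subst (asm) integrable_distr_eq) measurable
  qed
  have "integral\<^sup>L (PiM I (\<lambda>_. P)) F = integral\<^sup>L (distr (P \<Otimes>\<^sub>M PiM (I - {i}) (\<lambda>_. P)) (PiM I (\<lambda>_. P)) (\<lambda>p. (snd p)(i := fst p))) F"
    using D by simp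
  also have "\<dots> = (\<integral> p. F ((snd p)(i := fst p)) \<partial>(P \<Otimes>\<^sub>M PiM (I - {i}) (\<lambda>_. P)))"
    by (rule integral_distr) measurable
  also have "\<dots> = (\<integral> rest. (\<integral> t. F (rest(i:=t)) \<partial>P) \<partial>PiM (I - {i}) (\<lambda>_. P))"
    using integral_snd[of "\<lambda>x y. F (y(i := x))"] iF by (simp add: case_prod_beta')
  finally show ?thesis .
qed

lemma marg_nn:
  assumes P: "prob_space P" and I: "finite I" "i \<in> I"
    and G[measurable]: "G \<in> borel_measurable P"
  shows "(\<integral>\<^sup>+ d. G (d i) \<partial>PiM I (\<lambda>_. P)) = integral\<^sup>N P G"
proof -
  interpret R: prob_space "PiM (I-{i}) (\<lambda>_. P)" by (rule prob_space_PiM) (simp add: P)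
  have "(\<integral>\<^sup>+ d. G (d i) \<partial>PiM I (\<lambda>_. P)) = (\<integral>\<^sup>+ rest. (\<integral>\<^sup>+ t. G t \<partial>P) \<partial>PiM (I - {i}) (\<lambda>_. P))"
    by (subst split_nn[OF P I]) (use I in auto)
  also have "\<dots> = integral\<^sup>N P G" by (simp add: R.emeasure_space_1)
  finally show ?thesis .
qed

lemma markov_e:
  fixes g :: "'x \<Rightarrow> ennreal" and a :: real
  assumes g[measurable]: "g \<in> borel_measurable M" and a: "0 < a"
  shows "emeasure M {x\<in>space M. ennreal a \<le> g x} \<le> ennreal (1/a) * integral\<^sup>N M g"
proof -
  have "{x\<in>space M. ennreal a \<le> g x} \<subseteq> {x\<in>space M. 1 \<le> ennreal (1/a) * g x}"
  proof safe
    fix x assume x: "x \<in> space M" "ennreal a \<le> g x"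
    have "1 = ennreal (1/a) * ennreal a" using a by (simp add: ennreal_mult''[symmetric])
    also have "\<dots> \<le> ennreal (1/a) * g x" using x by (intro mult_left_mono) auto
    finally show "1 \<le> ennreal (1/a) * g x" using x by simp
  qed
  then have "emeasure M {x\<in>space M. ennreal a \<le> g x} \<le> emeasure M {x\<in>space M. 1 \<le> ennreal (1/a) * g x}"
    by (intro emeasure_mono) measurable
  also have "\<dots> \<le> ennreal (1/a) * (\<integral>\<^sup>+ x. g x * indicator (space M) x \<partial>M)"
    by (rule nn_integral_Markov_inequality) measurable
  also have "(\<integral>\<^sup>+ x. g x * indicator (space M) x \<partial>M) = integral\<^sup>N M g"
    by (intro nn_integral_cong) auto
  finally show ?thesis .
qed

lemma sec_meas:
  assumes P: "prob_space P" and I: "finite I" "i \<in> I"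
    and s[measurable]: "s \<in> measurable borel P"
    and rest: "rest \<in> space (PiM (I - {i}) (\<lambda>_. P))"
  shows "(\<lambda>z. rest(i := s z)) \<in> measurable borel (PiM I (\<lambda>_. P))"
  by (rule measurable_fun_upd[where J="I-{i}"]) (use I rest in auto)

lemma sq_sum_integral:
  fixes b :: "'i \<Rightarrow> 'x \<Rightarrow> real"
  assumes I: "finite I"
    and int: "\<And>i j. i \<in> I \<Longrightarrow> j \<in> I \<Longrightarrow> integrable M (\<lambda>x. b i x * b j x)"
    and cross: "\<And>i j. i \<in> I \<Longrightarrow> j \<in> I \<Longrightarrow> i \<noteq> j \<Longrightarrow> (\<integral>x. b i x * b j x \<partial>M) = 0"
  shows "(\<integral>x. (\<Sum>i\<in>I. b i x)^2 \<partial>M) = (\<Sum>i\<in>I. \<integral>x. (b i x)^2 \<partial>M)"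
proof -
  have "(\<integral>x. (\<Sum>i\<in>I. b i x)^2 \<partial>M) = (\<integral>x. (\<Sum>i\<in>I. \<Sum>j\<in>I. b i x * b j x) \<partial>M)"
    by (simp add: power2_eq_square sum_product)
  also have "\<dots> = (\<Sum>i\<in>I. \<Sum>j\<in>I. \<integral>x. b i x * b j x \<partial>M)"
    using int by (simp add: Bochner_Integration.integral_sum integrable_sum)
  also have "\<dots> = (\<Sum>i\<in>I. \<integral>x. b i x * b i x \<partial>M)"
  proof (intro sum.cong refl)
    fix i assume i: "i \<in> I"
    have "(\<Sum>j\<in>I. \<integral>x. b i x * b j x \<partial>M) = (\<integral>x. b i x * b i x \<partial>M) + (\<Sum>j\<in>I-{i}. \<integral>x. b i x * b j x \<partial>M)"
      using I i by (simp add: sum.remove)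
    also have "(\<Sum>j\<in>I-{i}. \<integral>x. b i x * b j x \<partial>M) = 0"
      using cross i by (intro sum.neutral) auto
    finally show "(\<Sum>j\<in>I. \<integral>x. b i x * b j x \<partial>M) = (\<integral>x. b i x * b i x \<partial>M)" by simp
  qed
  finally show ?thesis by (simp add: power2_eq_square)
qed

lemma tower_Pi_nn:
  fixes Zm :: "'t \<Rightarrow> 'z::topological_space" and H :: "(_ \<Rightarrow> 't) \<Rightarrow> ennreal"
  assumes P: "prob_space P" and I: "finite I" "i \<in> I"
    and Zm[measurable]: "Zm \<in> measurable P borel"
    and s[measurable]: "s \<in> measurable borel P" and sZ: "\<And>z. Zm (s z) = z"
    and r[measurable]: "r \<in> borel_measurable P" and q[measurable]: "q \<in> borel_measurable borel"
    and TN: "\<And>h. h \<in> borel_measurable borel \<Longrightarrow>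
        (\<integral>\<^sup>+t. h (Zm t) * ennreal ((r t)^2) \<partial>P) = (\<integral>\<^sup>+t. h (Zm t) * ennreal (q (Zm t)) \<partial>P)"
    and H[measurable]: "H \<in> borel_measurable (PiM I (\<lambda>_. P))"
    and Hinv: "\<And>d t. H (d(i := t)) = H (d(i := s (Zm t)))"
  shows "(\<integral>\<^sup>+d. H d * ennreal ((r (d i))^2) \<partial>PiM I (\<lambda>_. P)) = (\<integral>\<^sup>+d. H d * ennreal (q (Zm (d i))) \<partial>PiM I (\<lambda>_. P))"
proof -
  have [measurable]: "(\<lambda>d. d i) \<in> measurable (PiM I (\<lambda>_. P)) P" using I by measurable
  have "(\<integral>\<^sup>+d. H d * ennreal ((r (d i))^2) \<partial>PiM I (\<lambda>_. P))
      = (\<integral>\<^sup>+ rest. (\<integral>\<^sup>+ t. H (rest(i:=t)) * ennreal ((r t)^2) \<partial>P) \<partial>PiM (I - {i}) (\<lambda>_. P))"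
    by (subst split_nn[OF P I]) measurable
  also have "\<dots> = (\<integral>\<^sup>+ rest. (\<integral>\<^sup>+ t. H (rest(i:=t)) * ennreal (q (Zm t)) \<partial>P) \<partial>PiM (I - {i}) (\<lambda>_. P))"
  proof (rule nn_integral_cong)
    fix rest assume rest: "rest \<in> space (PiM (I - {i}) (\<lambda>_. P))"
    note sm[measurable] = sec_meas[OF P I s rest]
    have "(\<integral>\<^sup>+ t. H (rest(i:=t)) * ennreal ((r t)^2) \<partial>P) = (\<integral>\<^sup>+ t. (\<lambda>z. H (rest(i := s z))) (Zm t) * ennreal ((r t)^2) \<partial>P)"
      by (simp add: Hinv[of rest, symmetric])
    also have "\<dots> = (\<integral>\<^sup>+ t. (\<lambda>z. H (rest(i := s z))) (Zm t) * ennreal (q (Zm t)) \<partial>P)"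
      by (rule TN) measurable
    also have "\<dots> = (\<integral>\<^sup>+ t. H (rest(i:=t)) * ennreal (q (Zm t)) \<partial>P)"
      by (simp add: Hinv[of rest, symmetric])
    finally show "(\<integral>\<^sup>+ t. H (rest(i:=t)) * ennreal ((r t)^2) \<partial>P) = (\<integral>\<^sup>+ t. H (rest(i:=t)) * ennreal (q (Zm t)) \<partial>P)" .
  qed
  also have "\<dots> = (\<integral>\<^sup>+d. H d * ennreal (q (Zm (d i))) \<partial>PiM I (\<lambda>_. P))"
    by (subst split_nn[OF P I]) measurable
  finally show ?thesis .
qed

lemma tower_Pi_int:
  fixes Zm :: "'t \<Rightarrow> 'z::topological_space" and H :: "(_ \<Rightarrow> 't) \<Rightarrow> real"
  assumes P: "prob_space P" and I: "finite I" "i \<in> I"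
    and Zm[measurable]: "Zm \<in> measurable P borel"
    and s[measurable]: "s \<in> measurable borel P" and sZ: "\<And>z. Zm (s z) = z"
    and r[measurable]: "r \<in> borel_measurable P"
    and TS: "\<And>h. h \<in> borel_measurable borel \<Longrightarrow> (\<integral>t. h (Zm t) * r t \<partial>P) = 0"
    and H[measurable]: "H \<in> borel_measurable (PiM I (\<lambda>_. P))"
    and Hinv: "\<And>d t. H (d(i := t)) = H (d(i := s (Zm t)))"
    and int: "integrable (PiM I (\<lambda>_. P)) (\<lambda>d. H d * r (d i))"
  shows "(\<integral>d. H d * r (d i) \<partial>PiM I (\<lambda>_. P)) = 0"
proof -
  have "(\<integral>d. H d * r (d i) \<partial>PiM I (\<lambda>_. P))
      = (\<integral> rest. (\<integral> t. H (rest(i:=t)) * r t \<partial>P) \<partial>PiM (I - {i}) (\<lambda>_. P))"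
    by (subst split_int[OF P I int]) simp
  also have "\<dots> = (\<integral> rest. 0 \<partial>PiM (I - {i}) (\<lambda>_. P))"
  proof (rule Bochner_Integration.integral_cong[OF refl])
    fix rest assume rest: "rest \<in> space (PiM (I - {i}) (\<lambda>_. P))"
    note sm[measurable] = sec_meas[OF P I s rest]
    have "(\<integral> t. H (rest(i:=t)) * r t \<partial>P) = (\<integral> t. (\<lambda>z. H (rest(i := s z))) (Zm t) * r t \<partial>P)"
      by (simp add: Hinv[of rest, symmetric])
    also have "\<dots> = 0" by (rule TS) measurable
    finally show "(\<integral> t. H (rest(i:=t)) * r t \<partial>P) = 0" .
  qed
  finally show ?thesis by simp
qed

locale setting =
  fixes P :: "'t measure" and Zm :: "'t \<Rightarrow> 'z::topological_space" and s :: "'z \<Rightarrow> 't" and I :: "'i set"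
  assumes P: "prob_space P" and Zm[measurable]: "Zm \<in> measurable P borel"
    and s[measurable]: "s \<in> measurable borel P" and sZ: "\<And>z. Zm (s z) = z"
    and I: "finite I"
begin

abbreviation "PI \<equiv> PiM I (\<lambda>_. P)"

lemma comp_meas[measurable]: "k \<in> I \<Longrightarrow> (\<lambda>d. d k) \<in> measurable PI P"
  by measurable

lemma PI_prob: "prob_space PI" by (rule prob_space_PiM) (simp add: P)

lemma Zm_upd: "Zm ((d(k:=t)) k') = (if k' = k then Zm t else Zm (d k'))"
  by simp

lemma bound_ii:
  fixes \<delta> q :: "'z \<Rightarrow> real" and r :: "'t \<Rightarrow> real" and B a :: real
  assumes r[measurable]: "r \<in> borel_measurable P" and q[measurable]: "q \<in> borel_measurable borel"
    and \<delta>[measurable]: "\<delta> \<in> borel_measurable borel" and qnn: "\<And>z. 0 \<le> q z"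
    and TN: "\<And>h. h \<in> borel_measurable borel \<Longrightarrow>
        (\<integral>\<^sup>+t. h (Zm t) * ennreal ((r t)^2) \<partial>P) = (\<integral>\<^sup>+t. h (Zm t) * ennreal (q (Zm t)) \<partial>P)"
    and a: "0 < a"
  shows "emeasure PI {d\<in>space PI. (\<Sum>k\<in>I. (\<delta> (Zm (d k)))^2 * q (Zm (d k))) \<le> B \<and>
            a \<le> (\<Sum>k\<in>I. (\<delta> (Zm (d k)))^2 * (r (d k))^2)} \<le> ennreal (1/a) * ennreal B"
proof -
  interpret PI: prob_space PI by (rule PI_prob)
  define Eb where "Eb d = ((\<Sum>k\<in>I. (\<delta> (Zm (d k)))^2 * q (Zm (d k))) \<le> B)" for d
  define G where "G k d = ennreal (if Eb d then (\<delta> (Zm (d k)))^2 else 0)" for k d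
  define g where "g d = (\<Sum>k\<in>I. G k d * ennreal ((r (d k))^2))" for d
  have Ebm[measurable]: "Measurable.pred PI Eb" unfolding Eb_def by measurable
  have Gm[measurable]: "k \<in> I \<Longrightarrow> G k \<in> borel_measurable PI" for k unfolding G_def by measurable
  have gm[measurable]: "g \<in> borel_measurable PI" unfolding g_def by measurable
  have "{d\<in>space PI. (\<Sum>k\<in>I. (\<delta> (Zm (d k)))^2 * q (Zm (d k))) \<le> B \<and>
            a \<le> (\<Sum>k\<in>I. (\<delta> (Zm (d k)))^2 * (r (d k))^2)} \<subseteq> {d\<in>space PI. ennreal a \<le> g d}"
  proof safe
    fix d assume d: "d \<in> space PI" "(\<Sum>k\<in>I. (\<delta> (Zm (d k)))^2 * q (Zm (d k))) \<le> B"
      "a \<le> (\<Sum>k\<in>I. (\<delta> (Zm (d k)))^2 * (r (d k))^2)"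
    have "g d = (\<Sum>k\<in>I. ennreal ((\<delta> (Zm (d k)))^2 * (r (d k))^2))"
      using d by (simp add: g_def G_def Eb_def ennreal_mult'')
    also have "\<dots> = ennreal (\<Sum>k\<in>I. (\<delta> (Zm (d k)))^2 * (r (d k))^2)" by simp
    finally show "ennreal a \<le> g d" using ennreal_leI[OF d(3)] by simp
  qed
  then have "emeasure PI {d\<in>space PI. (\<Sum>k\<in>I. (\<delta> (Zm (d k)))^2 * q (Zm (d k))) \<le> B \<and>
            a \<le> (\<Sum>k\<in>I. (\<delta> (Zm (d k)))^2 * (r (d k))^2)} \<le> emeasure PI {d\<in>space PI. ennreal a \<le> g d}"
    by (intro emeasure_mono) measurable
  also have "\<dots> \<le> ennreal (1/a) * integral\<^sup>N PI g" by (rule markov_e[OF gm a])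
  also have "integral\<^sup>N PI g = (\<Sum>k\<in>I. \<integral>\<^sup>+d. G k d * ennreal ((r (d k))^2) \<partial>PI)"
    unfolding g_def by (rule nn_integral_sum) measurable
  also have "\<dots> = (\<Sum>k\<in>I. \<integral>\<^sup>+d. G k d * ennreal (q (Zm (d k))) \<partial>PI)"
  proof (rule sum.cong[OF refl])
    fix k assume k: "k \<in> I"
    show "(\<integral>\<^sup>+d. G k d * ennreal ((r (d k))^2) \<partial>PI) = (\<integral>\<^sup>+d. G k d * ennreal (q (Zm (d k))) \<partial>PI)"
    proof (rule tower_Pi_nn[OF P I k Zm s sZ r q TN])
      show "G k \<in> borel_measurable PI" using k by measurable
      show "G k (d(k := t)) = G k (d(k := s (Zm t)))" for d t
        unfolding G_def Eb_def by (simp add: if_distrib[of Zm] sZ cong: if_cong)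
    qed auto
  qed
  also have "\<dots> = (\<integral>\<^sup>+d. (\<Sum>k\<in>I. G k d * ennreal (q (Zm (d k)))) \<partial>PI)"
    by (rule nn_integral_sum[symmetric]) measurable
  also have "\<dots> \<le> (\<integral>\<^sup>+d. ennreal B \<partial>PI)"
  proof (rule nn_integral_mono)
    fix d assume "d \<in> space PI"
    show "(\<Sum>k\<in>I. G k d * ennreal (q (Zm (d k)))) \<le> ennreal B"
    proof (cases "Eb d")
      case True
      then have "(\<Sum>k\<in>I. G k d * ennreal (q (Zm (d k)))) = (\<Sum>k\<in>I. ennreal ((\<delta> (Zm (d k)))^2 * q (Zm (d k))))"
        by (simp add: G_def ennreal_mult'' qnn)
      also have "\<dots> = ennreal (\<Sum>k\<in>I. (\<delta> (Zm (d k)))^2 * q (Zm (d k)))" using qnn by simp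
      finally show ?thesis using True by (simp add: Eb_def ennreal_leI)
    next
      case False then show ?thesis by (simp add: G_def)
    qed
  qed
  also have "\<dots> = ennreal B" by (simp add: PI.emeasure_space_1)
  finally show ?thesis by (simp add: mult_left_mono)
qed

end

lemma abs_prod_le_sq: "\<bar>(x::real) * y\<bar> \<le> x^2 + y^2"
proof -
  have "0 \<le> (\<bar>x\<bar> - \<bar>y\<bar>)^2" by simp
  then have "2 * \<bar>x\<bar> * \<bar>y\<bar> \<le> x^2 + y^2" by (simp add: power2_eq_square algebra_simps)
  moreover have "\<bar>x * y\<bar> \<le> 2 * \<bar>x\<bar> * \<bar>y\<bar>" by (simp add: abs_mult)
  ultimately show ?thesis by linarith
qed

context setting begin

lemma bound_i:
  fixes \<delta> q Wt :: "'z \<Rightarrow> real" and r :: "'t \<Rightarrow> real" and B a C :: real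
  assumes r[measurable]: "r \<in> borel_measurable P" and q[measurable]: "q \<in> borel_measurable borel"
    and \<delta>[measurable]: "\<delta> \<in> borel_measurable borel" and Wt[measurable]: "Wt \<in> borel_measurable borel"
    and qnn: "\<And>z. 0 \<le> q z" and WC: "\<And>z. \<bar>Wt z\<bar> \<le> C"
    and TN: "\<And>h. h \<in> borel_measurable borel \<Longrightarrow>
        (\<integral>\<^sup>+t. h (Zm t) * ennreal ((r t)^2) \<partial>P) = (\<integral>\<^sup>+t. h (Zm t) * ennreal (q (Zm t)) \<partial>P)"
    and TS: "\<And>h. h \<in> borel_measurable borel \<Longrightarrow> (\<integral>t. h (Zm t) * r t \<partial>P) = 0"
    and a: "0 < a" and B0: "0 \<le> B"
  shows "emeasure PI {d\<in>space PI. (\<Sum>k\<in>I. (\<delta> (Zm (d k)))^2 * q (Zm (d k))) \<le> B \<and>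
            a \<le> \<bar>\<Sum>k\<in>I. \<delta> (Zm (d k)) * Wt (Zm (d k)) * r (d k)\<bar>} \<le> ennreal (1/a^2) * ennreal (C^2 * B)"
proof -
  interpret PI: prob_space PI by (rule PI_prob)
  define Eb where "Eb d = ((\<Sum>k\<in>I. (\<delta> (Zm (d k)))^2 * q (Zm (d k))) \<le> B)" for d
  define ind where "ind d = (if Eb d then 1 else 0::real)" for d
  define b where "b k d = ind d * \<delta> (Zm (d k)) * Wt (Zm (d k)) * r (d k)" for k d
  define c where "c k d = ind d * (\<delta> (Zm (d k)) * Wt (Zm (d k)))^2" for k d
  have Ebm[measurable]: "Measurable.pred PI Eb" unfolding Eb_def by measurable
  have indm[measurable]: "ind \<in> borel_measurable PI" unfolding ind_def by measurable
  have bm[measurable]: "k \<in> I \<Longrightarrow> b k \<in> borel_measurable PI" for k unfolding b_def by measurable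
  have cm[measurable]: "k \<in> I \<Longrightarrow> c k \<in> borel_measurable PI" for k unfolding c_def by measurable
  have cnn: "0 \<le> c k d" for k d unfolding c_def ind_def by simp
  have C0: "0 \<le> C" using WC[of undefined] by linarith
  have st1: "(\<integral>\<^sup>+d. ennreal ((b k d)^2) \<partial>PI) = (\<integral>\<^sup>+d. ennreal (c k d) * ennreal (q (Zm (d k))) \<partial>PI)"
    if k: "k \<in> I" for k
  proof -
    have "(\<integral>\<^sup>+d. ennreal ((b k d)^2) \<partial>PI) = (\<integral>\<^sup>+d. ennreal (c k d) * ennreal ((r (d k))^2) \<partial>PI)"
      by (intro nn_integral_cong) (simp add: b_def c_def ind_def ennreal_mult'' power_mult_distrib)
    also have "\<dots> = (\<integral>\<^sup>+d. ennreal (c k d) * ennreal (q (Zm (d k))) \<partial>PI)"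
    proof (rule tower_Pi_nn[OF P I k Zm s sZ r q TN])
      show "(\<lambda>d. ennreal (c k d)) \<in> borel_measurable PI" using k by measurable
      show "ennreal (c k (d(k := t))) = ennreal (c k (d(k := s (Zm t))))" for d t
        unfolding c_def ind_def Eb_def by (simp add: if_distrib[of Zm] sZ cong: if_cong)
    qed auto
    finally show ?thesis .
  qed
  have st2: "(\<Sum>k\<in>I. \<integral>\<^sup>+d. ennreal ((b k d)^2) \<partial>PI) \<le> ennreal (C^2 * B)"
  proof -
    have "(\<Sum>k\<in>I. \<integral>\<^sup>+d. ennreal ((b k d)^2) \<partial>PI) = (\<Sum>k\<in>I. \<integral>\<^sup>+d. ennreal (c k d) * ennreal (q (Zm (d k))) \<partial>PI)"
      using st1 by simp
    also have "\<dots> = (\<integral>\<^sup>+d. (\<Sum>k\<in>I. ennreal (c k d) * ennreal (q (Zm (d k)))) \<partial>PI)"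
      by (rule nn_integral_sum[symmetric]) measurable
    also have "\<dots> \<le> (\<integral>\<^sup>+d. ennreal (C^2 * B) \<partial>PI)"
    proof (rule nn_integral_mono)
      fix d assume "d \<in> space PI"
      have "(\<Sum>k\<in>I. ennreal (c k d) * ennreal (q (Zm (d k)))) = ennreal (\<Sum>k\<in>I. c k d * q (Zm (d k)))"
        using cnn qnn by (subst sum_ennreal[symmetric]) (auto simp: ennreal_mult'')
      also have "\<dots> \<le> ennreal (C^2 * B)"
      proof (intro ennreal_leI)
        show "(\<Sum>k\<in>I. c k d * q (Zm (d k))) \<le> C^2 * B"
        proof (cases "Eb d")
          case True
          have "(\<Sum>k\<in>I. c k d * q (Zm (d k))) \<le> (\<Sum>k\<in>I. C^2 * ((\<delta> (Zm (d k)))^2 * q (Zm (d k))))"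
          proof (rule sum_mono)
            fix k assume "k \<in> I"
            have "(Wt (Zm (d k)))^2 \<le> C^2" using power_mono[OF WC[of "Zm (d k)"] abs_ge_zero, of 2] by simp
            then have "(\<delta> (Zm (d k)))^2 * (Wt (Zm (d k)))^2 * q (Zm (d k)) \<le> (\<delta> (Zm (d k)))^2 * C^2 * q (Zm (d k))"
              using qnn by (intro mult_right_mono mult_left_mono) auto
            then show "c k d * q (Zm (d k)) \<le> C^2 * ((\<delta> (Zm (d k)))^2 * q (Zm (d k)))"
              using True by (simp add: c_def ind_def power_mult_distrib algebra_simps)
          qed
          also have "\<dots> = C^2 * (\<Sum>k\<in>I. (\<delta> (Zm (d k)))^2 * q (Zm (d k)))" by (simp add: sum_distrib_left)
          also have "\<dots> \<le> C^2 * B" using True unfolding Eb_def by (intro mult_left_mono) auto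
          finally show ?thesis .
        next
          case False
          then have "(\<Sum>k\<in>I. c k d * q (Zm (d k))) = 0" by (simp add: c_def ind_def)
          then show ?thesis using B0 C0 by simp
        qed
      qed
      finally show "(\<Sum>k\<in>I. ennreal (c k d) * ennreal (q (Zm (d k)))) \<le> ennreal (C^2 * B)" .
    qed
    also have "\<dots> = ennreal (C^2 * B)" by (simp add: PI.emeasure_space_1)
    finally show ?thesis .
  qed
  have fin: "(\<integral>\<^sup>+d. ennreal ((b k d)^2) \<partial>PI) < \<infinity>" if k: "k \<in> I" for k
  proof -
    have "(\<integral>\<^sup>+d. ennreal ((b k d)^2) \<partial>PI) \<le> (\<Sum>k\<in>I. \<integral>\<^sup>+d. ennreal ((b k d)^2) \<partial>PI)"
      using k I by (intro member_le_sum) auto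
    also have "\<dots> \<le> ennreal (C^2 * B)" by (rule st2)
    finally show ?thesis by (simp add: le_less_trans)
  qed
  have ib2: "integrable PI (\<lambda>d. (b k d)^2)" if k: "k \<in> I" for k
    unfolding integrable_iff_bounded using fin[OF k] k by simp
  have ibb: "integrable PI (\<lambda>d. b i d * b j d)" if "i \<in> I" "j \<in> I" for i j
    by (rule Bochner_Integration.integrable_bound[of _ "\<lambda>d. (b i d)^2 + (b j d)^2"])
       (use that ib2 abs_prod_le_sq in auto)
  have cross: "(\<integral>d. b i d * b j d \<partial>PI) = 0" if ij: "i \<in> I" "j \<in> I" "i \<noteq> j" for i j
  proof -
    define H where "H d = ind d * \<delta> (Zm (d i)) * Wt (Zm (d i)) * b j d" for d
    have Hm: "H \<in> borel_measurable PI" unfolding H_def using ij by measurable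
    have eq: "H d * r (d i) = b i d * b j d" for d unfolding H_def b_def by (simp add: algebra_simps)
    have "(\<integral>d. H d * r (d i) \<partial>PI) = 0"
    proof (rule tower_Pi_int[OF P I ij(1) Zm s sZ r TS Hm])
      show "H (d(i := t)) = H (d(i := s (Zm t)))" for d t
        using ij unfolding H_def b_def ind_def Eb_def by (simp add: if_distrib[of Zm] sZ cong: if_cong)
      show "integrable PI (\<lambda>d. H d * r (d i))" unfolding eq using ibb[OF ij(1,2)] .
    qed auto
    then show ?thesis unfolding eq .
  qed
  have sq: "(\<integral>d. (\<Sum>k\<in>I. b k d)^2 \<partial>PI) = (\<Sum>k\<in>I. \<integral>d. (b k d)^2 \<partial>PI)"
    by (rule sq_sum_integral[OF I ibb cross])
  have isq: "integrable PI (\<lambda>d. (\<Sum>k\<in>I. b k d)^2)"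
    by (simp add: power2_eq_square sum_product ibb)
  have "(\<integral>\<^sup>+d. ennreal ((\<Sum>k\<in>I. b k d)^2) \<partial>PI) = ennreal (\<integral>d. (\<Sum>k\<in>I. b k d)^2 \<partial>PI)"
    by (rule nn_integral_eq_integral[OF isq]) auto
  also have "\<dots> = ennreal (\<Sum>k\<in>I. \<integral>d. (b k d)^2 \<partial>PI)" using sq by simp
  also have "\<dots> = (\<Sum>k\<in>I. ennreal (\<integral>d. (b k d)^2 \<partial>PI))"
    by (rule sum_ennreal[symmetric]) auto
  also have "\<dots> = (\<Sum>k\<in>I. \<integral>\<^sup>+d. ennreal ((b k d)^2) \<partial>PI)"
    by (intro sum.cong refl nn_integral_eq_integral[symmetric] ib2) auto
  also have "\<dots> \<le> ennreal (C^2 * B)" by (rule st2)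
  finally have int_le: "(\<integral>\<^sup>+d. ennreal ((\<Sum>k\<in>I. b k d)^2) \<partial>PI) \<le> ennreal (C^2 * B)" .
  have a2: "0 < a^2" using a by simp
  have "{d\<in>space PI. (\<Sum>k\<in>I. (\<delta> (Zm (d k)))^2 * q (Zm (d k))) \<le> B \<and>
            a \<le> \<bar>\<Sum>k\<in>I. \<delta> (Zm (d k)) * Wt (Zm (d k)) * r (d k)\<bar>}
        \<subseteq> {d\<in>space PI. ennreal (a^2) \<le> ennreal ((\<Sum>k\<in>I. b k d)^2)}"
  proof safe
    fix d assume d: "d \<in> space PI" "(\<Sum>k\<in>I. (\<delta> (Zm (d k)))^2 * q (Zm (d k))) \<le> B"
      "a \<le> \<bar>\<Sum>k\<in>I. \<delta> (Zm (d k)) * Wt (Zm (d k)) * r (d k)\<bar>"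
    have "(\<Sum>k\<in>I. b k d) = (\<Sum>k\<in>I. \<delta> (Zm (d k)) * Wt (Zm (d k)) * r (d k))"
      using d(2) by (simp add: b_def ind_def Eb_def)
    moreover have "a^2 \<le> \<bar>\<Sum>k\<in>I. \<delta> (Zm (d k)) * Wt (Zm (d k)) * r (d k)\<bar>^2"
      using d(3) a by (intro power_mono) auto
    ultimately show "ennreal (a^2) \<le> ennreal ((\<Sum>k\<in>I. b k d)^2)"
      by (intro ennreal_leI) simp
  qed
  then have "emeasure PI {d\<in>space PI. (\<Sum>k\<in>I. (\<delta> (Zm (d k)))^2 * q (Zm (d k))) \<le> B \<and>
            a \<le> \<bar>\<Sum>k\<in>I. \<delta> (Zm (d k)) * Wt (Zm (d k)) * r (d k)\<bar>}
        \<le> emeasure PI {d\<in>space PI. ennreal (a^2) \<le> ennreal ((\<Sum>k\<in>I. b k d)^2)}"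
    by (intro emeasure_mono) measurable
  also have "\<dots> \<le> ennreal (1/a^2) * (\<integral>\<^sup>+d. ennreal ((\<Sum>k\<in>I. b k d)^2) \<partial>PI)"
    by (rule markov_e[OF _ a2]) measurable
  also have "\<dots> \<le> ennreal (1/a^2) * ennreal (C^2 * B)"
    by (intro mult_left_mono int_le) auto
  finally show ?thesis .
qed

end

lemma pred_eq_real: "f \<in> borel_measurable M \<Longrightarrow> g \<in> borel_measurable M \<Longrightarrow> Measurable.pred M (\<lambda>x. (f x::real) = g x)"
  unfolding pred_def by (rule borel_measurable_eq)

context setting begin

lemma marg_int_sq:
  fixes Y :: "'t \<Rightarrow> real"
  assumes Y[measurable]: "Y \<in> borel_measurable P" and iY: "integrable P (\<lambda>t. (Y t)^2)" and k: "k \<in> I"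
  shows "integrable PI (\<lambda>d. (Y (d k))^2)" "(\<integral>d. (Y (d k))^2 \<partial>PI) = (\<integral>t. (Y t)^2 \<partial>P)"
proof -
  have e: "(\<integral>\<^sup>+d. ennreal ((Y (d k))^2) \<partial>PI) = (\<integral>\<^sup>+t. ennreal ((Y t)^2) \<partial>P)"
    by (rule marg_nn[OF P I k]) measurable
  have f: "(\<integral>\<^sup>+t. ennreal ((Y t)^2) \<partial>P) < \<infinity>" using iY unfolding integrable_iff_bounded by simp
  show i: "integrable PI (\<lambda>d. (Y (d k))^2)" unfolding integrable_iff_bounded using e f k by simp
  have "ennreal (\<integral>d. (Y (d k))^2 \<partial>PI) = ennreal (\<integral>t. (Y t)^2 \<partial>P)"
    using e nn_integral_eq_integral[OF i] nn_integral_eq_integral[OF iY] by simp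
  then show "(\<integral>d. (Y (d k))^2 \<partial>PI) = (\<integral>t. (Y t)^2 \<partial>P)"
    by (subst (asm) ennreal_inj) auto
qed

lemma cheb:
  fixes Y :: "'t \<Rightarrow> real" and a :: real
  assumes Y[measurable]: "Y \<in> borel_measurable P" and iY: "integrable P (\<lambda>t. (Y t)^2)"
    and m0: "(\<integral>t. Y t \<partial>P) = 0" and a: "0 < a"
  shows "emeasure PI {d\<in>space PI. a \<le> \<bar>\<Sum>k\<in>I. Y (d k)\<bar>} \<le> ennreal (1/a^2) * ennreal (real (card I) * (\<integral>t. (Y t)^2 \<partial>P))"
proof -
  interpret PI: prob_space PI by (rule PI_prob)
  have ib2: "integrable PI (\<lambda>d. (Y (d k))^2)" if "k \<in> I" for k using marg_int_sq[OF Y iY that] by simp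
  have ibb: "integrable PI (\<lambda>d. Y (d i) * Y (d j))" if "i \<in> I" "j \<in> I" for i j
    by (rule Bochner_Integration.integrable_bound[of _ "\<lambda>d. (Y (d i))^2 + (Y (d j))^2"])
       (use that ib2 abs_prod_le_sq in auto)
  have cross: "(\<integral>d. Y (d i) * Y (d j) \<partial>PI) = 0" if ij: "i \<in> I" "j \<in> I" "i \<noteq> j" for i j
  proof -
    have "(\<integral>d. Y (d i) * Y (d j) \<partial>PI) = (\<integral> rest. (\<integral> t. Y ((rest(i:=t)) i) * Y ((rest(i:=t)) j) \<partial>P) \<partial>PiM (I - {i}) (\<lambda>_. P))"
      by (rule split_int[OF P I ij(1) ibb[OF ij(1,2)]])
    also have "\<dots> = (\<integral> rest. (\<integral> t. Y t \<partial>P) * Y (rest j) \<partial>PiM (I - {i}) (\<lambda>_. P))"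
      using ij by simp
    finally show ?thesis using m0 by simp
  qed
  have sq: "(\<integral>d. (\<Sum>k\<in>I. Y (d k))^2 \<partial>PI) = (\<Sum>k\<in>I. \<integral>d. (Y (d k))^2 \<partial>PI)"
    by (rule sq_sum_integral[OF I ibb cross])
  also have "\<dots> = real (card I) * (\<integral>t. (Y t)^2 \<partial>P)"
    using marg_int_sq[OF Y iY] by simp
  finally have sq': "(\<integral>d. (\<Sum>k\<in>I. Y (d k))^2 \<partial>PI) = real (card I) * (\<integral>t. (Y t)^2 \<partial>P)" .
  have isq: "integrable PI (\<lambda>d. (\<Sum>k\<in>I. Y (d k))^2)"
    by (simp add: power2_eq_square sum_product ibb)
  have int_le: "(\<integral>\<^sup>+d. ennreal ((\<Sum>k\<in>I. Y (d k))^2) \<partial>PI) = ennreal (real (card I) * (\<integral>t. (Y t)^2 \<partial>P))"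
    using nn_integral_eq_integral[OF isq] sq' by simp
  have a2: "0 < a^2" using a by simp
  have "{d\<in>space PI. a \<le> \<bar>\<Sum>k\<in>I. Y (d k)\<bar>} \<subseteq> {d\<in>space PI. ennreal (a^2) \<le> ennreal ((\<Sum>k\<in>I. Y (d k))^2)}"
  proof safe
    fix d assume "d \<in> space PI" "a \<le> \<bar>\<Sum>k\<in>I. Y (d k)\<bar>"
    then have "a^2 \<le> \<bar>\<Sum>k\<in>I. Y (d k)\<bar>^2" using a by (intro power_mono) auto
    then show "ennreal (a^2) \<le> ennreal ((\<Sum>k\<in>I. Y (d k))^2)" by (intro ennreal_leI) simp
  qed
  then have "emeasure PI {d\<in>space PI. a \<le> \<bar>\<Sum>k\<in>I. Y (d k)\<bar>} \<le> emeasure PI {d\<in>space PI. ennreal (a^2) \<le> ennreal ((\<Sum>k\<in>I. Y (d k))^2)}"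
    by (intro emeasure_mono) measurable
  also have "\<dots> \<le> ennreal (1/a^2) * (\<integral>\<^sup>+d. ennreal ((\<Sum>k\<in>I. Y (d k))^2) \<partial>PI)"
    by (rule markov_e[OF _ a2]) measurable
  finally show ?thesis unfolding int_le .
qed

lemma markov_sum:
  fixes V :: "'t \<Rightarrow> real" and a :: real
  assumes V[measurable]: "V \<in> borel_measurable P" and Vnn: "\<And>t. 0 \<le> V t" and a: "0 < a"
  shows "emeasure PI {d\<in>space PI. a \<le> (\<Sum>k\<in>I. V (d k))} \<le> ennreal (1/a) * (of_nat (card I) * (\<integral>\<^sup>+t. ennreal (V t) \<partial>P))"
proof -
  have "{d\<in>space PI. a \<le> (\<Sum>k\<in>I. V (d k))} \<subseteq> {d\<in>space PI. ennreal a \<le> (\<Sum>k\<in>I. ennreal (V (d k)))}"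
    using Vnn by (auto intro!: ennreal_leI simp: sum_nonneg)
  then have "emeasure PI {d\<in>space PI. a \<le> (\<Sum>k\<in>I. V (d k))} \<le> emeasure PI {d\<in>space PI. ennreal a \<le> (\<Sum>k\<in>I. ennreal (V (d k)))}"
    by (intro emeasure_mono) measurable
  also have "\<dots> \<le> ennreal (1/a) * (\<integral>\<^sup>+d. (\<Sum>k\<in>I. ennreal (V (d k))) \<partial>PI)"
    by (rule markov_e[OF _ a]) measurable
  also have "(\<integral>\<^sup>+d. (\<Sum>k\<in>I. ennreal (V (d k))) \<partial>PI) = (\<Sum>k\<in>I. \<integral>\<^sup>+d. ennreal (V (d k)) \<partial>PI)"
    by (rule nn_integral_sum) measurable
  also have "\<dots> = (\<Sum>k\<in>I. \<integral>\<^sup>+t. ennreal (V t) \<partial>P)"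
    by (intro sum.cong refl marg_nn[OF P I]) measurable
  also have "\<dots> = of_nat (card I) * (\<integral>\<^sup>+t. ennreal (V t) \<partial>P)" by simp
  finally show ?thesis .
qed

lemma null_pair:
  fixes Rf :: "'t \<Rightarrow> real"
  assumes Rf[measurable]: "Rf \<in> borel_measurable P" and ij: "i \<in> I" "j \<in> I" "i \<noteq> j"
    and null: "\<And>c. c \<noteq> 0 \<Longrightarrow> emeasure P {t\<in>space P. Rf t = c} = 0"
  shows "emeasure PI {d\<in>space PI. Rf (d i) = Rf (d j) \<and> Rf (d j) \<noteq> 0} = 0"
proof -
  have [measurable]: "(\<lambda>d. d i) \<in> measurable PI P" "(\<lambda>d. d j) \<in> measurable PI P"
    using ij comp_meas by auto
  have pm[measurable]: "Measurable.pred PI (\<lambda>x. Rf (x i) = Rf (x j) \<and> Rf (x j) \<noteq> 0)"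
    by (intro pred_intros_logic pred_eq_real) measurable
  have "emeasure PI {d\<in>space PI. Rf (d i) = Rf (d j) \<and> Rf (d j) \<noteq> 0}
      = (\<integral>\<^sup>+d. indicator {d\<in>space PI. Rf (d i) = Rf (d j) \<and> Rf (d j) \<noteq> 0} d \<partial>PI)"
    by (rule nn_integral_indicator[symmetric]) measurable
  also have "\<dots> = (\<integral>\<^sup>+d. (if Rf (d i) = Rf (d j) \<and> Rf (d j) \<noteq> 0 then 1 else 0) \<partial>PI)"
    by (intro nn_integral_cong) (auto simp: indicator_def)
  also have "\<dots> = (\<integral>\<^sup>+ rest. (\<integral>\<^sup>+ t. (if Rf ((rest(i:=t)) i) = Rf ((rest(i:=t)) j) \<and> Rf ((rest(i:=t)) j) \<noteq> 0 then 1 else 0) \<partial>P) \<partial>PiM (I - {i}) (\<lambda>_. P))"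
    by (rule split_nn[OF P I ij(1)]) measurable
  also have "\<dots> = (\<integral>\<^sup>+ rest. 0 \<partial>PiM (I - {i}) (\<lambda>_. P))"
  proof (rule nn_integral_cong)
    fix rest
    have "(\<integral>\<^sup>+ t. (if Rf ((rest(i:=t)) i) = Rf ((rest(i:=t)) j) \<and> Rf ((rest(i:=t)) j) \<noteq> 0 then 1 else 0) \<partial>P)
        = (\<integral>\<^sup>+ t. (if Rf t = Rf (rest j) \<and> Rf (rest j) \<noteq> 0 then 1 else 0) \<partial>P)" using ij by simp
    also have "\<dots> = 0"
    proof (cases "Rf (rest j) = 0")
      case True then show ?thesis by simp
    next
      case False
      have "(\<integral>\<^sup>+ t. (if Rf t = Rf (rest j) \<and> Rf (rest j) \<noteq> 0 then 1 else 0) \<partial>P)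
          = (\<integral>\<^sup>+ t. indicator {t\<in>space P. Rf t = Rf (rest j)} t \<partial>P)"
        using False by (intro nn_integral_cong) (auto simp: indicator_def)
      also have "\<dots> = emeasure P {t\<in>space P. Rf t = Rf (rest j)}" by (rule nn_integral_indicator) measurable
      also have "\<dots> = 0" using null[OF False] .
      finally show ?thesis .
    qed
    finally show "(\<integral>\<^sup>+ t. (if Rf ((rest(i:=t)) i) = Rf ((rest(i:=t)) j) \<and> Rf ((rest(i:=t)) j) \<noteq> 0 then 1 else 0) \<partial>P) = 0" .
  qed
  finally show ?thesis by simp
qed

end

lemma sum_abs_prod_le:
  fixes a b :: "nat \<Rightarrow> real"
  shows "(\<Sum>k<n. \<bar>a k * b k\<bar>) \<le> sqrt ((\<Sum>k<n. (a k)^2) * (\<Sum>k<n. (b k)^2))"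
proof -
  have "(\<Sum>k<n. \<bar>a k\<bar> * \<bar>b k\<bar>)^2 \<le> (\<Sum>k<n. \<bar>a k\<bar>^2) * (\<Sum>k<n. \<bar>b k\<bar>^2)"
    by (rule Cauchy_Schwarz_ineq_sum)
  then have "(\<Sum>k<n. \<bar>a k * b k\<bar>)^2 \<le> (\<Sum>k<n. (a k)^2) * (\<Sum>k<n. (b k)^2)" by (simp add: abs_mult)
  then show ?thesis by (simp add: real_le_rsqrt)
qed

lemma sum_prod_le_prod_sum:
  fixes a b :: "nat \<Rightarrow> real"
  assumes "\<And>k. 0 \<le> a k" "\<And>k. 0 \<le> b k"
  shows "(\<Sum>k<n. a k * b k) \<le> (\<Sum>k<n. a k) * (\<Sum>k<n. b k)"
proof -
  have "(\<Sum>k<n. a k * b k) \<le> (\<Sum>k<n. a k * (\<Sum>j<n. b j))"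
    by (intro sum_mono mult_left_mono member_le_sum) (use assms in auto)
  also have "\<dots> = (\<Sum>k<n. a k) * (\<Sum>k<n. b k)" by (simp add: sum_distrib_right)
  finally show ?thesis .
qed

lemma sq_bound4:
  fixes e x d r w C :: real
  assumes "\<bar>w\<bar> \<le> C"
  shows "((e + d) * (x + r) * w)^2 \<le> 4 * C^2 * (e^2 * x^2 + r^2 * e^2 + d^2 * x^2 + d^2 * r^2)"
proof -
  have w2: "w^2 \<le> C^2" using power_mono[OF assms abs_ge_zero, of 2] by simp
  have a: "(e + d)^2 \<le> 2 * (e^2 + d^2)" using sum_squares_ge_zero[of "e - d" 0] by (simp add: power2_eq_square algebra_simps)
  have b: "(x + r)^2 \<le> 2 * (x^2 + r^2)" using sum_squares_ge_zero[of "x - r" 0] by (simp add: power2_eq_square algebra_simps)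
  have "((e + d) * (x + r) * w)^2 = (e + d)^2 * (x + r)^2 * w^2" by (simp add: power_mult_distrib)
  also have "\<dots> \<le> (2 * (e^2 + d^2)) * (2 * (x^2 + r^2)) * C^2"
    by (intro mult_mono a b w2) auto
  also have "\<dots> = 4 * C^2 * (e^2 * x^2 + r^2 * e^2 + d^2 * x^2 + d^2 * r^2)" by (simp add: algebra_simps)
  finally show ?thesis .
qed

lemma det_bound:
  fixes e x \<delta> \<rho> W :: "nat \<Rightarrow> real" and n :: nat and \<mu> C L' c :: real
  assumes R: "\<And>k. R k = (e k + \<delta> k) * (x k + \<rho> k) * W k"
    and n2: "2 \<le> n" and mu: "\<mu> \<noteq> 0" and WC: "\<And>k. \<bar>W k\<bar> \<le> C" and L': "0 < L'" and c: "0 < c"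
    and h1: "\<bar>\<Sum>k<n. (e k * x k * W k - \<mu>)\<bar> < real n * \<bar>\<mu>\<bar> / 8"
    and h3: "\<bar>\<Sum>k<n. \<delta> k * W k * x k\<bar> < real n * \<bar>\<mu>\<bar> / 8"
    and h4: "\<bar>\<Sum>k<n. \<rho> k * W k * e k\<bar> < real n * \<bar>\<mu>\<bar> / 8"
    and hA: "(\<Sum>k<n. (\<delta> k)^2) * (\<Sum>k<n. (\<rho> k)^2) \<le> real n"
    and h5: "(\<Sum>k<n. (e k)^2 * (x k)^2) < real n * L'"
    and h6: "(\<Sum>k<n. (\<delta> k)^2 * (x k)^2) < real n * L'"
    and h7: "(\<Sum>k<n. (\<rho> k)^2 * (e k)^2) < real n * L'"
    and h8: "\<not> (R 0 = R 1 \<and> R 1 \<noteq> 0)"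
    and hn1: "8 * C \<le> sqrt (real n) * \<bar>\<mu>\<bar>"
    and hn2: "16 * c^2 * C^2 * (3 * L' + 1) \<le> real n * \<mu>^2"
  shows "c \<le> \<bar>Tstat n R\<bar>"
proof -
  have C0: "0 \<le> C" using WC[of 0] by linarith
  have npos: "0 < real n" using n2 by simp
  define S where "S = (\<Sum>k<n. R k)"
  define Q where "Q = (\<Sum>k<n. (R k)^2)"
  define Rb where "Rb = S / real n"
  have RbD: "Rbar n R = Rb" unfolding Rbar_def Rb_def S_def ..
  have "\<bar>\<Sum>k<n. \<delta> k * \<rho> k * W k\<bar> \<le> (\<Sum>k<n. \<bar>\<delta> k * \<rho> k * W k\<bar>)" by (rule sum_abs)
  also have "\<dots> \<le> (\<Sum>k<n. C * \<bar>\<delta> k * \<rho> k\<bar>)"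
  proof (intro sum_mono)
    fix k
    have "\<bar>\<delta> k * \<rho> k * W k\<bar> = \<bar>\<delta> k * \<rho> k\<bar> * \<bar>W k\<bar>" by (simp add: abs_mult)
    also have "\<dots> \<le> \<bar>\<delta> k * \<rho> k\<bar> * C" by (intro mult_left_mono WC) auto
    finally show "\<bar>\<delta> k * \<rho> k * W k\<bar> \<le> C * \<bar>\<delta> k * \<rho> k\<bar>" by (simp add: mult.commute)
  qed
  also have "\<dots> = C * (\<Sum>k<n. \<bar>\<delta> k * \<rho> k\<bar>)" by (simp add: sum_distrib_left)
  also have "\<dots> \<le> C * sqrt ((\<Sum>k<n. (\<delta> k)^2) * (\<Sum>k<n. (\<rho> k)^2))"
    by (intro mult_left_mono sum_abs_prod_le C0)
  also have "\<dots> \<le> C * sqrt (real n)" using hA C0 by (intro mult_left_mono) auto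
  finally have hdr: "\<bar>\<Sum>k<n. \<delta> k * \<rho> k * W k\<bar> \<le> C * sqrt (real n)" .
  have "8 * C * sqrt (real n) \<le> (sqrt (real n) * \<bar>\<mu>\<bar>) * sqrt (real n)"
    by (rule mult_right_mono[OF hn1]) simp
  also have "\<dots> = real n * \<bar>\<mu>\<bar>" by (simp add: mult.commute mult.left_commute)
  finally have hdr': "C * sqrt (real n) \<le> real n * \<bar>\<mu>\<bar> / 8" by simp
  have Ssplit: "S - real n * \<mu> = (\<Sum>k<n. (e k * x k * W k - \<mu>)) + (\<Sum>k<n. \<delta> k * W k * x k)
        + (\<Sum>k<n. \<rho> k * W k * e k) + (\<Sum>k<n. \<delta> k * \<rho> k * W k)"
    unfolding S_def R by (simp add: sum_subtractf sum.distrib[symmetric] algebra_simps)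
  have "\<bar>S - real n * \<mu>\<bar> < real n * \<bar>\<mu>\<bar> / 2"
    using h1 h3 h4 hdr hdr' unfolding Ssplit by linarith
  then have Sbig: "real n * \<bar>\<mu>\<bar> / 2 < \<bar>S\<bar>" by linarith
  have Rbbig: "\<bar>\<mu>\<bar> / 2 < \<bar>Rb\<bar>" using Sbig npos unfolding Rb_def by (simp add: field_simps)
  have "Q \<le> (\<Sum>k<n. 4 * C^2 * ((e k)^2 * (x k)^2 + (\<rho> k)^2 * (e k)^2 + (\<delta> k)^2 * (x k)^2 + (\<delta> k)^2 * (\<rho> k)^2))"
    unfolding Q_def R by (intro sum_mono sq_bound4 WC)
  also have "\<dots> = 4 * C^2 * ((\<Sum>k<n. (e k)^2 * (x k)^2) + (\<Sum>k<n. (\<rho> k)^2 * (e k)^2) + (\<Sum>k<n. (\<delta> k)^2 * (x k)^2) + (\<Sum>k<n. (\<delta> k)^2 * (\<rho> k)^2))"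
    by (simp only: sum_distrib_left[symmetric] sum.distrib)
  also have "\<dots> \<le> 4 * C^2 * (3 * (real n * L') + real n)"
  proof (intro mult_left_mono)
    have "(\<Sum>k<n. (\<delta> k)^2 * (\<rho> k)^2) \<le> (\<Sum>k<n. (\<delta> k)^2) * (\<Sum>k<n. (\<rho> k)^2)"
      by (rule sum_prod_le_prod_sum) auto
    then show "(\<Sum>k<n. (e k)^2 * (x k)^2) + (\<Sum>k<n. (\<rho> k)^2 * (e k)^2) + (\<Sum>k<n. (\<delta> k)^2 * (x k)^2) + (\<Sum>k<n. (\<delta> k)^2 * (\<rho> k)^2) \<le> 3 * (real n * L') + real n"
      using h5 h6 h7 hA by linarith
  qed simp
  finally have Qb: "Q \<le> 4 * C^2 * (3 * (real n * L') + real n)" .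
  define s2 where "s2 = Q / real n - Rb^2"
  have TD: "Tstat n R = sqrt (real n) * Rb / sqrt s2" unfolding Tstat_def RbD s2_def Q_def ..
  have var: "(\<Sum>k<n. (R k - Rb)^2) = real n * s2"
  proof -
    have "(\<Sum>k<n. (R k - Rb)^2) = (\<Sum>k<n. ((R k)^2 - 2 * Rb * R k) + Rb^2)"
      by (intro sum.cong) (simp_all add: power2_diff algebra_simps)
    also have "\<dots> = Q - 2 * Rb * S + real n * Rb^2"
      unfolding Q_def S_def by (simp add: sum.distrib sum_subtractf sum_distrib_left)
    finally have "(\<Sum>k<n. (R k - Rb)^2) = Q - 2 * Rb * S + real n * Rb^2" .
    also have "\<dots> = real n * s2" unfolding s2_def Rb_def using npos by (simp add: field_simps power2_eq_square)
    finally show ?thesis .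
  qed
  have "0 \<le> real n * s2" unfolding var[symmetric] by (intro sum_nonneg) auto
  then have s2nn: "0 \<le> s2" using npos by (simp add: zero_le_mult_iff)
  have s2pos: "0 < s2"
  proof (rule ccontr)
    assume "\<not> 0 < s2"
    then have "s2 = 0" using s2nn by simp
    then have "(\<Sum>k<n. (R k - Rb)^2) = 0" using var by simp
    then have "\<forall>k\<in>{..<n}. (R k - Rb)^2 = 0" by (subst (asm) sum_nonneg_eq_0_iff) auto
    then have "R 0 = Rb" "R 1 = Rb" using n2 by auto
    moreover have "Rb \<noteq> 0" using Rbbig by auto
    ultimately show False using h8 by simp
  qed
  define L where "L = 4 * C^2 * (3 * L' + 1)"
  have s2L: "s2 \<le> L"
  proof -
    have "s2 \<le> Q / real n" unfolding s2_def by simp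
    also have "\<dots> \<le> 4 * C^2 * (3 * (real n * L') + real n) / real n" using Qb npos by (simp add: divide_right_mono)
    also have "\<dots> = L" unfolding L_def using npos by (simp add: field_simps)
    finally show ?thesis .
  qed
  have Lpos: "0 < L" using s2pos s2L by simp
  have T2: "(Tstat n R)^2 = real n * Rb^2 / s2" unfolding TD using s2pos npos
    by (simp add: power_divide power_mult_distrib)
  have "c^2 \<le> real n * (\<mu>^2 / 4) / L"
    using hn2 Lpos unfolding L_def by (simp add: field_simps)
  also have "\<dots> \<le> real n * Rb^2 / L"
  proof -
    have "(\<bar>\<mu>\<bar>/2)^2 \<le> \<bar>Rb\<bar>^2" using Rbbig by (intro power_mono) auto
    then have "\<mu>^2 / 4 \<le> Rb^2" by (simp add: power_divide)
    then show ?thesis using Lpos npos by (intro divide_right_mono mult_left_mono) auto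
  qed
  also have "\<dots> \<le> real n * Rb^2 / s2" using s2pos s2L by (intro divide_left_mono) (auto intro: mult_pos_pos)
  finally have "c^2 \<le> (Tstat n R)^2" unfolding T2 .
  then show ?thesis using c by (metis abs_le_square_iff abs_of_pos)
qed

lemma vec_nth_meas[measurable]: "(\<lambda>x::real^'n. x $ j) \<in> borel_measurable borel"
  by (intro borel_measurable_continuous_onI continuous_intros)

lemma section_null:
  fixes p b c :: real and j :: "'n::finite"
  assumes c: "c \<noteq> 0"
  shows "emeasure lborel {x::real^'n. (x $ j - p) * b = c} = 0"
proof (cases "b = 0")
  case True then show ?thesis using c by simp
next
  case False
  have eq: "{x::real^'n. (x $ j - p) * b = c} = {x. x \<bullet> axis j 1 = p + c / b}"
    using False by (auto simp: cart_eq_inner_axis[symmetric] field_simps)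
  have neg: "negligible {x::real^'n. x \<bullet> axis j 1 = p + c / b}"
    by (rule negligible_standard_hyperplane) simp
  have meas: "{x::real^'n. x \<bullet> axis j 1 = p + c / b} \<in> sets lborel"
    unfolding cart_eq_inner_axis[symmetric] by measurable
  have "{x::real^'n. x \<bullet> axis j 1 = p + c / b} \<in> null_sets lebesgue"
    using neg negligible_iff_null_sets by blast
  then have "{x::real^'n. x \<bullet> axis j 1 = p + c / b} \<in> null_sets lborel"
    using null_sets_completion_iff[OF meas] by simp
  then show ?thesis unfolding eq by auto
qed

lemma null_R:
  fixes \<phi> \<gamma> Wt :: "real^'dz::finite \<Rightarrow> real" and c :: real and j :: "'dx::finite" and l :: "'dy::finite"
  assumes [measurable]: "\<phi> \<in> borel_measurable borel" "\<gamma> \<in> borel_measurable borel" "Wt \<in> borel_measurable borel"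
    and c: "c \<noteq> 0"
  shows "{t :: (real^'dx) \<times> (real^'dy) \<times> (real^'dz). (fst t $ j - \<phi> (snd (snd t))) * (fst (snd t) $ l - \<gamma> (snd (snd t))) * Wt (snd (snd t)) = c} \<in> null_sets lborel"
proof -
  let ?A = "{t :: (real^'dx) \<times> (real^'dy) \<times> (real^'dz). (fst t $ j - \<phi> (snd (snd t))) * (fst (snd t) $ l - \<gamma> (snd (snd t))) * Wt (snd (snd t)) = c}"
  have [measurable]: "(\<lambda>t::(real^'dx) \<times> (real^'dy) \<times> (real^'dz). fst t $ j) \<in> borel_measurable borel"
    "(\<lambda>t::(real^'dx) \<times> (real^'dy) \<times> (real^'dz). fst (snd t) $ l) \<in> borel_measurable borel"
    "(\<lambda>t::(real^'dx) \<times> (real^'dy) \<times> (real^'dz). snd (snd t)) \<in> borel_measurable borel"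
    by (intro borel_measurable_continuous_onI continuous_intros)+
  have "{t \<in> space borel. (\<lambda>t :: (real^'dx) \<times> (real^'dy) \<times> (real^'dz). (fst t $ j - \<phi> (snd (snd t))) * (fst (snd t) $ l - \<gamma> (snd (snd t))) * Wt (snd (snd t))) t = (\<lambda>_. c) t} \<in> sets borel"
    by (rule borel_measurable_eq) measurable
  then have Ab: "?A \<in> sets borel" by simp
  have As: "?A \<in> sets (lborel \<Otimes>\<^sub>M lborel)" using Ab by (subst lborel_prod) simp
  have "emeasure (lborel \<Otimes>\<^sub>M lborel) ?A = (\<integral>\<^sup>+y. emeasure lborel ((\<lambda>x. (x, y)) -` ?A) \<partial>lborel)"
    by (rule lborel_pair.emeasure_pair_measure_alt2[OF As])
  also have "\<dots> = (\<integral>\<^sup>+y. 0 \<partial>(lborel :: ((real^'dy) \<times> (real^'dz)) measure))"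
  proof (rule nn_integral_cong)
    fix y :: "(real^'dy) \<times> (real^'dz)"
    have "(\<lambda>x. (x, y)) -` ?A = {x. (x $ j - \<phi> (snd y)) * ((fst y $ l - \<gamma> (snd y)) * Wt (snd y)) = c}"
      by (auto simp: mult.assoc)
    then show "emeasure lborel ((\<lambda>x. (x, y)) -` ?A) = 0" using section_null[OF c] by simp
  qed
  finally have "emeasure lborel ?A = 0" by (simp add: lborel_prod)
  then show ?thesis using Ab by auto
qed

lemma obs_meas:
  fixes P :: "('dx::finite, 'dy::finite, 'dz::finite) obs measure"
  assumes "sets P = sets borel"
  shows "(\<lambda>t::('dx, 'dy, 'dz) obs. snd (snd t)) \<in> measurable P borel"
    "(\<lambda>t::('dx, 'dy, 'dz) obs. fst t $ j) \<in> borel_measurable P"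
    "(\<lambda>t::('dx, 'dy, 'dz) obs. fst (snd t) $ l) \<in> borel_measurable P"
    "(\<lambda>z. (0, 0, z)) \<in> measurable borel P"
proof -
  have "(\<lambda>t::('dx, 'dy, 'dz) obs. snd (snd t)) \<in> measurable borel borel"
    "(\<lambda>t::('dx, 'dy, 'dz) obs. fst t $ j) \<in> borel_measurable borel"
    "(\<lambda>t::('dx, 'dy, 'dz) obs. fst (snd t) $ l) \<in> borel_measurable borel"
    by (intro borel_measurable_continuous_onI continuous_intros)+
  moreover have "(\<lambda>z::real^'dz. (0::real^'dx, 0::real^'dy, z)) \<in> measurable borel borel"
    by (intro borel_measurable_continuous_onI continuous_intros)
  then have "(\<lambda>z::real^'dz. (0::real^'dx, 0::real^'dy, z)) \<in> measurable borel P"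
    using measurable_cong_sets[OF refl assms, where M = "borel :: (real^'dz) measure"] by simp
  ultimately show "(\<lambda>t::('dx, 'dy, 'dz) obs. snd (snd t)) \<in> measurable P borel"
    "(\<lambda>t::('dx, 'dy, 'dz) obs. fst t $ j) \<in> borel_measurable P"
    "(\<lambda>t::('dx, 'dy, 'dz) obs. fst (snd t) $ l) \<in> borel_measurable P"
    "(\<lambda>z. (0, 0, z)) \<in> measurable borel P"
    using measurable_cong_sets[OF assms refl] measurable_cong_sets[OF refl assms] by auto
qed

lemma emeasure_union_le:
  assumes "A \<in> sets M" "B \<in> sets M"
  shows "emeasure M (A \<union> B) \<le> emeasure M A + emeasure M B"
  using emeasure_subadditive[OF assms] .

lemma eu:
  assumes "A \<in> sets M" "B \<in> sets M" "emeasure M A \<le> x"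
  shows "emeasure M (A \<union> B) \<le> x + emeasure M B"
  using emeasure_subadditive[OF assms(1,2)] add_right_mono[OF assms(3)] by (rule order_trans)

lemma core:
  fixes P :: "('dx::finite, 'dy::finite, 'dz::finite) obs measure"
    and \<phi> \<gamma> f0 g0 u0 v0 Wt :: "real^'dz \<Rightarrow> real" and j0 :: 'dx and l0 :: 'dy
    and n :: nat and c C L' \<mu> Var V0r :: real
  defines "Zc \<equiv> \<lambda>t::('dx, 'dy, 'dz) obs. snd (snd t)"
  defines "\<epsilon> \<equiv> \<lambda>t::('dx, 'dy, 'dz) obs. fst t $ j0 - f0 (snd (snd t))"
    and "\<xi> \<equiv> \<lambda>t::('dx, 'dy, 'dz) obs. fst (snd t) $ l0 - g0 (snd (snd t))"
  assumes PP: "prob_space P" "sets P = sets borel" "absolutely_continuous lborel P"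
    and meas[measurable]: "\<phi> \<in> borel_measurable borel" "\<gamma> \<in> borel_measurable borel"
      "f0 \<in> borel_measurable borel" "g0 \<in> borel_measurable borel"
      "u0 \<in> borel_measurable borel" "v0 \<in> borel_measurable borel" "Wt \<in> borel_measurable borel"
    and unn: "\<And>z. 0 \<le> u0 z" and vnn: "\<And>z. 0 \<le> v0 z"
    and TSe: "\<And>h. h \<in> borel_measurable borel \<Longrightarrow> (\<integral>t. h (Zc t) * \<epsilon> t \<partial>P) = 0"
    and TSx: "\<And>h. h \<in> borel_measurable borel \<Longrightarrow> (\<integral>t. h (Zc t) * \<xi> t \<partial>P) = 0"
    and TNe: "\<And>h. h \<in> borel_measurable borel \<Longrightarrow>
        (\<integral>\<^sup>+t. h (Zc t) * ennreal ((\<epsilon> t)^2) \<partial>P) = (\<integral>\<^sup>+t. h (Zc t) * ennreal (u0 (Zc t)) \<partial>P)"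
    and TNx: "\<And>h. h \<in> borel_measurable borel \<Longrightarrow>
        (\<integral>\<^sup>+t. h (Zc t) * ennreal ((\<xi> t)^2) \<partial>P) = (\<integral>\<^sup>+t. h (Zc t) * ennreal (v0 (Zc t)) \<partial>P)"
    and WC: "\<And>z. \<bar>Wt z\<bar> \<le> C" and Cpos: "0 < C"
    and mu: "(\<integral>t. \<epsilon> t * \<xi> t * Wt (Zc t) \<partial>P) = \<mu>" "\<mu> \<noteq> 0"
    and iY: "integrable P (\<lambda>t. (\<epsilon> t * \<xi> t * Wt (Zc t) - \<mu>)^2)"
    and Var: "Var = (\<integral>t. (\<epsilon> t * \<xi> t * Wt (Zc t) - \<mu>)^2 \<partial>P)"
    and V0: "(\<integral>\<^sup>+t. ennreal ((\<epsilon> t)^2 * (\<xi> t)^2) \<partial>P) = ennreal V0r" "0 \<le> V0r"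
    and n2: "2 \<le> n" and L': "0 < L'" and c: "0 < c"
    and hn1: "8 * C \<le> sqrt (real n) * \<bar>\<mu>\<bar>"
    and hn2: "16 * c^2 * C^2 * (3 * L' + 1) \<le> real n * \<mu>^2"
  shows "emeasure (PiM {..<n} (\<lambda>_. P)) {d\<in>space (PiM {..<n} (\<lambda>_. P)). \<bar>Tstat n (Rvec \<phi> \<gamma> Wt j0 l0 d)\<bar> < c}
    \<le> emeasure (PiM {..<n} (\<lambda>_. P)) {d\<in>space (PiM {..<n} (\<lambda>_. P)). 1 < Berr n f0 \<phi> v0 (\<lambda>i. Zc (d i))}
     + emeasure (PiM {..<n} (\<lambda>_. P)) {d\<in>space (PiM {..<n} (\<lambda>_. P)). 1 < Berr n g0 \<gamma> u0 (\<lambda>i. Zc (d i))}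
     + emeasure (PiM {..<n} (\<lambda>_. P)) {d\<in>space (PiM {..<n} (\<lambda>_. P)). 1 < real n * (Aerr n f0 \<phi> (\<lambda>i. Zc (d i)) * Aerr n g0 \<gamma> (\<lambda>i. Zc (d i)))}
     + ennreal ((64 * Var + 128 * C^2) / (real n * \<mu>^2) + (V0r + 2) / L')"
proof -
  note om = obs_meas[OF PP(2)]
  have Zcm[measurable]: "Zc \<in> measurable P borel" unfolding Zc_def by (rule om(1))
  have [measurable]: "(\<lambda>t::('dx, 'dy, 'dz) obs. snd (snd t)) \<in> measurable P borel" by (rule om(1))
  have [measurable]: "(\<lambda>t::('dx, 'dy, 'dz) obs. fst t $ j0) \<in> borel_measurable P" by (rule om(2))
  have [measurable]: "(\<lambda>t::('dx, 'dy, 'dz) obs. fst (snd t) $ l0) \<in> borel_measurable P" by (rule om(3))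
  have sm[measurable]: "(\<lambda>z. (0, 0, z)) \<in> measurable borel P" by (rule om(4))
  have em[measurable]: "\<epsilon> \<in> borel_measurable P" unfolding \<epsilon>_def by measurable
  have xm[measurable]: "\<xi> \<in> borel_measurable P" unfolding \<xi>_def by measurable
  interpret setting P Zc "\<lambda>z. (0, 0, z)" "{..<n}"
    by (intro setting.intro PP(1) Zcm sm) (simp_all add: Zc_def)
  interpret PI: prob_space PI by (rule PI_prob)
  interpret Pp: prob_space P by (rule PP(1))

  define \<delta> where "\<delta> z = f0 z - \<phi> z" for z
  define \<rho> where "\<rho> z = g0 z - \<gamma> z" for z
  define Y where "Y t = \<epsilon> t * \<xi> t * Wt (Zc t) - \<mu>" for t
  define Rf where "Rf t = (fst t $ j0 - \<phi> (Zc t)) * (fst (snd t) $ l0 - \<gamma> (Zc t)) * Wt (Zc t)" for t :: "('dx, 'dy, 'dz) obs"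
  define a where "a = real n * \<bar>\<mu>\<bar> / 8"
  define b where "b = real n * L'"
  have npos: "0 < real n" using n2 by simp
  have apos: "0 < a" using npos mu(2) by (simp add: a_def)
  have bpos: "0 < b" using npos L' by (simp add: b_def)
  have [measurable]: "\<delta> \<in> borel_measurable borel" "\<rho> \<in> borel_measurable borel" unfolding \<delta>_def \<rho>_def by measurable
  have Ym[measurable]: "Y \<in> borel_measurable P" unfolding Y_def by measurable
  have Rfm[measurable]: "Rf \<in> borel_measurable P" unfolding Rf_def by measurable
  define B1 where "B1 = {d\<in>space PI. 1 < Berr n f0 \<phi> v0 (\<lambda>i. Zc (d i))}"
  define B2 where "B2 = {d\<in>space PI. 1 < Berr n g0 \<gamma> u0 (\<lambda>i. Zc (d i))}"
  define B3 where "B3 = {d\<in>space PI. 1 < real n * (Aerr n f0 \<phi> (\<lambda>i. Zc (d i)) * Aerr n g0 \<gamma> (\<lambda>i. Zc (d i)))}"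
  define S1 where "S1 = {d\<in>space PI. a \<le> \<bar>\<Sum>k\<in>{..<n}. Y (d k)\<bar>}"
  define S2 where "S2 = {d\<in>space PI. (\<Sum>k\<in>{..<n}. (\<delta> (Zc (d k)))^2 * v0 (Zc (d k))) \<le> real n \<and>
            a \<le> \<bar>\<Sum>k\<in>{..<n}. \<delta> (Zc (d k)) * Wt (Zc (d k)) * \<xi> (d k)\<bar>}"
  define S3 where "S3 = {d\<in>space PI. (\<Sum>k\<in>{..<n}. (\<rho> (Zc (d k)))^2 * u0 (Zc (d k))) \<le> real n \<and>
            a \<le> \<bar>\<Sum>k\<in>{..<n}. \<rho> (Zc (d k)) * Wt (Zc (d k)) * \<epsilon> (d k)\<bar>}"
  define S4 where "S4 = {d\<in>space PI. b \<le> (\<Sum>k\<in>{..<n}. (\<lambda>t. (\<epsilon> t)^2 * (\<xi> t)^2) (d k))}"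
  define S5 where "S5 = {d\<in>space PI. (\<Sum>k\<in>{..<n}. (\<delta> (Zc (d k)))^2 * v0 (Zc (d k))) \<le> real n \<and>
            b \<le> (\<Sum>k\<in>{..<n}. (\<delta> (Zc (d k)))^2 * (\<xi> (d k))^2)}"
  define S6 where "S6 = {d\<in>space PI. (\<Sum>k\<in>{..<n}. (\<rho> (Zc (d k)))^2 * u0 (Zc (d k))) \<le> real n \<and>
            b \<le> (\<Sum>k\<in>{..<n}. (\<rho> (Zc (d k)))^2 * (\<epsilon> (d k))^2)}"
  define S7 where "S7 = {d\<in>space PI. Rf (d 0) = Rf (d 1) \<and> Rf (d 1) \<noteq> 0}"
  define Bad where "Bad = {d\<in>space PI. \<bar>Tstat n (Rvec \<phi> \<gamma> Wt j0 l0 d)\<bar> < c}"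
  have m0[measurable]: "(\<lambda>d. d 0) \<in> measurable PI P" "(\<lambda>d. d 1) \<in> measurable PI P"
    using n2 comp_meas by auto
  have sets[measurable]: "B1 \<in> sets PI" "B2 \<in> sets PI" "B3 \<in> sets PI" "S1 \<in> sets PI" "S2 \<in> sets PI"
    "S3 \<in> sets PI" "S4 \<in> sets PI" "S5 \<in> sets PI" "S6 \<in> sets PI"
    unfolding B1_def B2_def B3_def S1_def S2_def S3_def S4_def S5_def S6_def Berr_def Aerr_def
    by measurable
  have s7[measurable]: "S7 \<in> sets PI"
  proof -
    have "Measurable.pred PI (\<lambda>x. Rf (x 0) = Rf (x 1) \<and> Rf (x 1) \<noteq> 0)"
      by (intro pred_intros_logic pred_eq_real) measurable
    then show ?thesis unfolding S7_def pred_def by simp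
  qed

  have Badm[measurable]: "Bad \<in> sets PI"
    unfolding Bad_def Tstat_def Rbar_def Rvec_def by measurable
  have cardI: "card {..<n} = n" by simp
  have iY1: "integrable P Y"
  proof (rule Bochner_Integration.integrable_bound[of _ "\<lambda>t. 1 + (Y t)^2"])
    show "integrable P (\<lambda>t. 1 + (Y t)^2)" using iY unfolding Y_def by (intro Bochner_Integration.integrable_add) (auto simp: Pp.integrable_const)
    show "AE t in P. norm (Y t) \<le> norm (1 + (Y t)^2)"
    proof (rule AE_I2)
      fix t
      have "\<bar>Y t\<bar> \<le> 1 + (Y t)^2"
      proof (cases "\<bar>Y t\<bar> \<le> 1")
        case True then show ?thesis by (smt (verit) zero_le_power2)
      next
        case False then have "\<bar>Y t\<bar> \<le> \<bar>Y t\<bar> * \<bar>Y t\<bar>" by (intro mult_le_cancel_left1[THEN iffD2]) auto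
        then show ?thesis by (simp add: power2_eq_square abs_mult[symmetric])
      qed
      then show "norm (Y t) \<le> norm (1 + (Y t)^2)" by simp
    qed
  qed simp
  have Y0: "(\<integral>t. Y t \<partial>P) = 0"
  proof -
    have ie: "integrable P (\<lambda>t. \<epsilon> t * \<xi> t * Wt (Zc t))"
    proof -
      have "integrable P (\<lambda>t. Y t + \<mu>)" using iY1 Pp.integrable_const by simp
      then show ?thesis by (simp add: Y_def)
    qed
    have "(\<integral>t. Y t \<partial>P) = (\<integral>t. \<epsilon> t * \<xi> t * Wt (Zc t) \<partial>P) - (\<integral>t. \<mu> \<partial>P)"
      unfolding Y_def by (rule Bochner_Integration.integral_diff[OF ie]) (simp add: Pp.integrable_const)
    then show ?thesis using mu(1) Pp.prob_space by simp
  qed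
  have e1: "emeasure PI S1 \<le> ennreal (64 * Var / (real n * \<mu>^2))"
  proof -
    have "emeasure PI S1 \<le> ennreal (1/a^2) * ennreal (real (card {..<n}) * (\<integral>t. (Y t)^2 \<partial>P))"
      unfolding S1_def using cheb[OF Ym _ Y0 apos] iY unfolding Y_def by simp
    also have "\<dots> = ennreal (64 * Var / (real n * \<mu>^2))"
    proof -
      have Vnn: "0 \<le> Var" unfolding Var by simp
      have "(1/a^2) * (real n * Var) = 64 * Var / (real n * \<mu>^2)"
        unfolding a_def using npos mu(2) by (simp add: field_simps power2_eq_square abs_mult_self_eq)
      then show ?thesis using Vnn by (simp add: ennreal_mult[symmetric] Var Y_def cardI)
    qed
    finally show ?thesis .
  qed

  have sZ: "\<And>z. Zc (0, 0, z) = z" by (simp add: Zc_def)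
  have aux_i: "ennreal (1/a^2) * ennreal (C^2 * real n) = ennreal (64 * C^2 / (real n * \<mu>^2))"
  proof -
    have "(1/a^2) * (C^2 * real n) = 64 * C^2 / (real n * \<mu>^2)"
      unfolding a_def using npos mu(2) by (simp add: field_simps power2_eq_square abs_mult_self_eq)
    then show ?thesis by (simp add: ennreal_mult[symmetric])
  qed
  have e2: "emeasure PI S2 \<le> ennreal (64 * C^2 / (real n * \<mu>^2))"
  proof -
    have "emeasure PI S2 \<le> ennreal (1/a^2) * ennreal (C^2 * real n)"
      unfolding S2_def
      by (rule bound_i[OF xm meas(6) _ meas(7) vnn WC TNx TSx apos]) (auto simp: Zc_def)
    then show ?thesis using aux_i by simp
  qed
  have e3: "emeasure PI S3 \<le> ennreal (64 * C^2 / (real n * \<mu>^2))"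
  proof -
    have "emeasure PI S3 \<le> ennreal (1/a^2) * ennreal (C^2 * real n)"
      unfolding S3_def
      by (rule bound_i[OF em meas(5) _ meas(7) unn WC TNe TSe apos]) (auto simp: Zc_def)
    then show ?thesis using aux_i by simp
  qed
  have aux_ii: "ennreal (1/b) * ennreal (real n) = ennreal (1 / L')"
  proof -
    have "(1/b) * real n = 1 / L'" unfolding b_def using npos L' by (simp add: field_simps)
    then show ?thesis using bpos by (subst ennreal_mult[symmetric]) auto
  qed
  have e5: "emeasure PI S5 \<le> ennreal (1 / L')"
  proof -
    have "emeasure PI S5 \<le> ennreal (1/b) * ennreal (real n)"
      unfolding S5_def by (rule bound_ii[OF xm meas(6) _ vnn TNx bpos]) (auto simp: Zc_def)
    then show ?thesis using aux_ii by simp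
  qed
  have e6: "emeasure PI S6 \<le> ennreal (1 / L')"
  proof -
    have "emeasure PI S6 \<le> ennreal (1/b) * ennreal (real n)"
      unfolding S6_def by (rule bound_ii[OF em meas(5) _ unn TNe bpos]) (auto simp: Zc_def)
    then show ?thesis using aux_ii by simp
  qed
  have e4: "emeasure PI S4 \<le> ennreal (V0r / L')"
  proof -
    have "emeasure PI S4 \<le> ennreal (1/b) * (of_nat (card {..<n}) * (\<integral>\<^sup>+t. ennreal ((\<epsilon> t)^2 * (\<xi> t)^2) \<partial>P))"
      unfolding S4_def by (rule markov_sum[OF _ _ bpos]) auto
    also have "\<dots> = ennreal (1/b) * (ennreal (real n) * ennreal V0r)"
      using V0 by (simp add: ennreal_of_nat_eq_real_of_nat)
    also have "\<dots> = ennreal (V0r / L')"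
    proof -
      have "(1/b) * (real n * V0r) = V0r / L'" unfolding b_def using npos L' by (simp add: field_simps)
      then show ?thesis using V0(2) bpos by (subst ennreal_mult[symmetric], simp_all, subst ennreal_mult[symmetric], auto)
    qed
    finally show ?thesis .
  qed
  have e7: "emeasure PI S7 = 0"
    unfolding S7_def
  proof (rule null_pair[OF Rfm])
    fix c' :: real assume c': "c' \<noteq> 0"
    have sp: "space P = UNIV" using sets_eq_imp_space_eq[OF PP(2)] by simp
    have "{t :: ('dx, 'dy, 'dz) obs. (fst t $ j0 - \<phi> (snd (snd t))) * (fst (snd t) $ l0 - \<gamma> (snd (snd t))) * Wt (snd (snd t)) = c'} \<in> null_sets lborel"
      by (rule null_R[OF meas(1,2,7) c'])
    then have "{t :: ('dx, 'dy, 'dz) obs. (fst t $ j0 - \<phi> (snd (snd t))) * (fst (snd t) $ l0 - \<gamma> (snd (snd t))) * Wt (snd (snd t)) = c'} \<in> null_sets P"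
      using PP(3) unfolding absolutely_continuous_def by auto
    then show "emeasure P {t\<in>space P. Rf t = c'} = 0" by (simp add: sp Rf_def Zc_def null_setsD1)
  qed (use n2 in auto)

  have incl: "Bad \<subseteq> B1 \<union> B2 \<union> B3 \<union> S1 \<union> S2 \<union> S3 \<union> S4 \<union> S5 \<union> S6 \<union> S7"
  proof
    fix d assume dB: "d \<in> Bad"
    show "d \<in> B1 \<union> B2 \<union> B3 \<union> S1 \<union> S2 \<union> S3 \<union> S4 \<union> S5 \<union> S6 \<union> S7"
    proof (rule ccontr)
      assume nd: "d \<notin> B1 \<union> B2 \<union> B3 \<union> S1 \<union> S2 \<union> S3 \<union> S4 \<union> S5 \<union> S6 \<union> S7"
      have ds: "d \<in> space PI" and Tlt: "\<bar>Tstat n (Rvec \<phi> \<gamma> Wt j0 l0 d)\<bar> < c" using dB by (auto simp: Bad_def)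
      have nB1: "\<not> 1 < Berr n f0 \<phi> v0 (\<lambda>i. Zc (d i))" using nd ds by (auto simp: B1_def)
      have nB2: "\<not> 1 < Berr n g0 \<gamma> u0 (\<lambda>i. Zc (d i))" using nd ds by (auto simp: B2_def)
      have nB3: "\<not> 1 < real n * (Aerr n f0 \<phi> (\<lambda>i. Zc (d i)) * Aerr n g0 \<gamma> (\<lambda>i. Zc (d i)))" using nd ds by (auto simp: B3_def)
      have Ef: "(\<Sum>k\<in>{..<n}. (\<delta> (Zc (d k)))^2 * v0 (Zc (d k))) \<le> real n"
        using nB1 npos by (simp add: Berr_def \<delta>_def field_simps)
      have Eg: "(\<Sum>k\<in>{..<n}. (\<rho> (Zc (d k)))^2 * u0 (Zc (d k))) \<le> real n"
        using nB2 npos by (simp add: Berr_def \<rho>_def field_simps)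
      have hA: "(\<Sum>k<n. (\<delta> (Zc (d k)))^2) * (\<Sum>k<n. (\<rho> (Zc (d k)))^2) \<le> real n"
      proof -
        define X where "X = real n * (Aerr n f0 \<phi> (\<lambda>i. Zc (d i)) * Aerr n g0 \<gamma> (\<lambda>i. Zc (d i)))"
        have X1: "X \<le> 1" using nB3 by (simp add: X_def)
        have "(\<Sum>k<n. (\<delta> (Zc (d k)))^2) * (\<Sum>k<n. (\<rho> (Zc (d k)))^2) = real n * X"
          unfolding X_def Aerr_def \<delta>_def \<rho>_def using npos by (simp add: field_simps power2_eq_square)
        also have "\<dots> \<le> real n * 1" using X1 npos by (intro mult_left_mono) auto
        finally show ?thesis by simp
      qed
      have h1: "\<bar>\<Sum>k<n. (\<epsilon> (d k) * \<xi> (d k) * Wt (Zc (d k)) - \<mu>)\<bar> < real n * \<bar>\<mu>\<bar> / 8"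
        using nd ds by (auto simp: S1_def Y_def a_def)
      have h3: "\<bar>\<Sum>k<n. \<delta> (Zc (d k)) * Wt (Zc (d k)) * \<xi> (d k)\<bar> < real n * \<bar>\<mu>\<bar> / 8"
        using nd ds Ef by (auto simp: S2_def a_def)
      have h4: "\<bar>\<Sum>k<n. \<rho> (Zc (d k)) * Wt (Zc (d k)) * \<epsilon> (d k)\<bar> < real n * \<bar>\<mu>\<bar> / 8"
        using nd ds Eg by (auto simp: S3_def a_def)
      have h5: "(\<Sum>k<n. (\<epsilon> (d k))^2 * (\<xi> (d k))^2) < real n * L'"
        using nd ds by (auto simp: S4_def b_def)
      have h6: "(\<Sum>k<n. (\<delta> (Zc (d k)))^2 * (\<xi> (d k))^2) < real n * L'"
        using nd ds Ef by (auto simp: S5_def b_def)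
      have h7: "(\<Sum>k<n. (\<rho> (Zc (d k)))^2 * (\<epsilon> (d k))^2) < real n * L'"
        using nd ds Eg by (auto simp: S6_def b_def)
      have RR: "Rvec \<phi> \<gamma> Wt j0 l0 d k = Rf (d k)" for k
        by (simp add: Rvec_def Rf_def Zc_def)
      have h8: "\<not> (Rvec \<phi> \<gamma> Wt j0 l0 d 0 = Rvec \<phi> \<gamma> Wt j0 l0 d 1 \<and> Rvec \<phi> \<gamma> Wt j0 l0 d 1 \<noteq> 0)"
        using nd ds unfolding RR by (auto simp: S7_def)
      have Req: "Rvec \<phi> \<gamma> Wt j0 l0 d k = (\<epsilon> (d k) + \<delta> (Zc (d k))) * (\<xi> (d k) + \<rho> (Zc (d k))) * Wt (Zc (d k))" for k
        by (simp add: Rvec_def \<epsilon>_def \<xi>_def \<delta>_def \<rho>_def Zc_def)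
      have "c \<le> \<bar>Tstat n (Rvec \<phi> \<gamma> Wt j0 l0 d)\<bar>"
        by (rule det_bound[where e="\<lambda>k. \<epsilon> (d k)" and x="\<lambda>k. \<xi> (d k)" and \<delta>="\<lambda>k. \<delta> (Zc (d k))"
              and \<rho>="\<lambda>k. \<rho> (Zc (d k))" and W="\<lambda>k. Wt (Zc (d k))", OF Req n2 mu(2) WC L' c h1 h3 h4 hA h5 h6 h7 h8 hn1 hn2])
      then show False using Tlt by simp
    qed
  qed
  have "emeasure PI Bad \<le> emeasure PI (B1 \<union> B2 \<union> B3 \<union> S1 \<union> S2 \<union> S3 \<union> S4 \<union> S5 \<union> S6 \<union> S7)"
    by (rule emeasure_mono[OF incl]) measurable
  also have "\<dots> \<le> emeasure PI B1 + emeasure PI B2 + emeasure PI B3 + emeasure PI S1 + emeasure PI S2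
      + emeasure PI S3 + emeasure PI S4 + emeasure PI S5 + emeasure PI S6 + emeasure PI S7"
    by (intro eu sets.Un sets s7 order_refl)
  also have "\<dots> = emeasure PI B1 + emeasure PI B2 + emeasure PI B3 + (emeasure PI S1 + emeasure PI S2
      + emeasure PI S3 + emeasure PI S4 + emeasure PI S5 + emeasure PI S6 + emeasure PI S7)"
    by (simp add: add.assoc)
  also have "\<dots> \<le> emeasure PI B1 + emeasure PI B2 + emeasure PI B3 + ennreal ((64 * Var + 128 * C^2) / (real n * \<mu>^2) + (V0r + 2) / L')"
  proof (rule add_left_mono)
    have Vnn: "0 \<le> Var" unfolding Var by simp
    have "emeasure PI S1 + emeasure PI S2 + emeasure PI S3 + emeasure PI S4 + emeasure PI S5 + emeasure PI S6 + emeasure PI S7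
       \<le> ennreal (64 * Var / (real n * \<mu>^2)) + ennreal (64 * C^2 / (real n * \<mu>^2)) + ennreal (64 * C^2 / (real n * \<mu>^2))
         + ennreal (V0r / L') + ennreal (1 / L') + ennreal (1 / L') + 0"
      by (intro add_mono e1 e2 e3 e4 e5 e6) (simp add: e7)
    also have "\<dots> = ennreal (64 * Var / (real n * \<mu>^2) + 64 * C^2 / (real n * \<mu>^2) + 64 * C^2 / (real n * \<mu>^2)
         + V0r / L' + 1 / L' + 1 / L')"
      using Vnn V0(2) L' npos by (simp add: ennreal_plus[symmetric] del: ennreal_plus)
    also have "\<dots> = ennreal ((64 * Var + 128 * C^2) / (real n * \<mu>^2) + (V0r + 2) / L')"
      by (simp add: add_divide_distrib field_simps)
    finally show "emeasure PI S1 + emeasure PI S2 + emeasure PI S3 + emeasure PI S4 + emeasure PI S5 + emeasure PI S6 + emeasure PI S7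
       \<le> ennreal ((64 * Var + 128 * C^2) / (real n * \<mu>^2) + (V0r + 2) / L')" .
  qed
  finally show ?thesis unfolding Bad_def B1_def B2_def B3_def .
qed

lemma lift:
  fixes M :: "'o measure" and Aux :: "'a measure" and N :: "'d measure"
  assumes M: "prob_space M" and N: "prob_space N"
    and aux[measurable]: "aux \<in> measurable M Aux" and Dv[measurable]: "Dv \<in> measurable M N"
    and dist: "distr M N Dv = N"
    and indep: "\<And>A B. A \<in> sets Aux \<Longrightarrow> B \<in> sets N \<Longrightarrow>
       measure M {\<omega>\<in>space M. aux \<omega> \<in> A \<and> Dv \<omega> \<in> B} = measure M {\<omega>\<in>space M. aux \<omega> \<in> A} * measure M {\<omega>\<in>space M. Dv \<omega> \<in> B}"
    and S: "S \<in> sets (Aux \<Otimes>\<^sub>M N)"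
  shows "emeasure M {\<omega>\<in>space M. (aux \<omega>, Dv \<omega>) \<in> S} = (\<integral>\<^sup>+\<omega>. emeasure N (Pair (aux \<omega>) -` S) \<partial>M)"
proof -
  interpret M: prob_space M by fact
  interpret N: prob_space N by fact
  define Q where "Q = distr M Aux aux"
  interpret Q: prob_space Q unfolding Q_def by (rule M.prob_space_distr) simp
  interpret QN: pair_sigma_finite Q N ..
  define J where "J = distr M (Aux \<Otimes>\<^sub>M N) (\<lambda>\<omega>. (aux \<omega>, Dv \<omega>))"
  have sQ: "sets Q = sets Aux" by (simp add: Q_def)
  have QJ: "Q \<Otimes>\<^sub>M N = J"
  proof (rule pair_measure_eqI)
    show "sigma_finite_measure Q" "sigma_finite_measure N" by unfold_locales
    show "sets (Q \<Otimes>\<^sub>M N) = sets J" unfolding J_def using sQ by (simp cong: sets_pair_measure_cong)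
    fix A B assume A: "A \<in> sets Q" and B: "B \<in> sets N"
    then have A': "A \<in> sets Aux" using sQ by simp
    have "emeasure J (A \<times> B) = emeasure M ((\<lambda>\<omega>. (aux \<omega>, Dv \<omega>)) -` (A \<times> B) \<inter> space M)"
      unfolding J_def using A' B by (subst emeasure_distr) auto
    also have "(\<lambda>\<omega>. (aux \<omega>, Dv \<omega>)) -` (A \<times> B) \<inter> space M = {\<omega>\<in>space M. aux \<omega> \<in> A \<and> Dv \<omega> \<in> B}" by auto
    finally have eJ: "emeasure J (A \<times> B) = ennreal (measure M {\<omega>\<in>space M. aux \<omega> \<in> A \<and> Dv \<omega> \<in> B})"
      by (simp add: M.emeasure_eq_measure)
    have eQ: "emeasure Q A = ennreal (measure M {\<omega>\<in>space M. aux \<omega> \<in> A})"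
      unfolding Q_def using A' by (subst emeasure_distr) (auto simp: M.emeasure_eq_measure Int_def conj_commute)
    have "emeasure N B = emeasure (distr M N Dv) B" using dist by simp
    also have "\<dots> = ennreal (measure M {\<omega>\<in>space M. Dv \<omega> \<in> B})"
      using B by (subst emeasure_distr) (auto simp: M.emeasure_eq_measure Int_def conj_commute)
    finally have eN: "emeasure N B = ennreal (measure M {\<omega>\<in>space M. Dv \<omega> \<in> B})" .
    show "emeasure Q A * emeasure N B = emeasure J (A \<times> B)"
      unfolding eJ eQ eN indep[OF A' B] by (simp add: ennreal_mult)
  qed
  have S': "S \<in> sets (Q \<Otimes>\<^sub>M N)" using S sQ by (simp cong: sets_pair_measure_cong)
  have "emeasure M {\<omega>\<in>space M. (aux \<omega>, Dv \<omega>) \<in> S} = emeasure J S"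
    unfolding J_def using S by (subst emeasure_distr) (auto simp: Int_def conj_commute)
  also have "\<dots> = emeasure (Q \<Otimes>\<^sub>M N) S" using QJ by simp
  also have "\<dots> = (\<integral>\<^sup>+a. emeasure N (Pair a -` S) \<partial>Q)"
    by (rule N.emeasure_pair_measure_alt[OF S'])
  also have "\<dots> = (\<integral>\<^sup>+\<omega>. emeasure N (Pair (aux \<omega>) -` S) \<partial>M)"
    unfolding Q_def
    by (rule nn_integral_distr) (use N.measurable_emeasure_Pair[OF S] in auto)
  finally show ?thesis .
qed

lemma Tstat_cong:
  assumes "\<And>i. i < n \<Longrightarrow> r i = r' i" shows "Tstat n r = Tstat n r'"
proof -
  have "sum r {..<n} = sum r' {..<n}" "(\<Sum>i<n. (r i)^2) = (\<Sum>i<n. (r' i)^2)"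
    using assms by (auto intro!: sum.cong)
  then show ?thesis unfolding Tstat_def Rbar_def by simp
qed

lemma Berr_cong: "(\<And>i. i < n \<Longrightarrow> zs i = zs' i) \<Longrightarrow> Berr n f fh v zs = Berr n f fh v zs'"
  unfolding Berr_def by (auto intro!: sum.cong arg_cong2[where f="(/)"])

lemma Aerr_cong: "(\<And>i. i < n \<Longrightarrow> zs i = zs' i) \<Longrightarrow> Aerr n f fh zs = Aerr n f fh zs'"
  unfolding Aerr_def by (auto intro!: sum.cong arg_cong2[where f="(/)"])

lemma Berr_nn: "(\<And>z. 0 \<le> v z) \<Longrightarrow> 0 \<le> Berr n f fh v zs"
  unfolding Berr_def by (intro divide_nonneg_nonneg sum_nonneg) auto

lemma Aerr_nn: "0 \<le> Aerr n f fh zs"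
  unfolding Aerr_def by (intro divide_nonneg_nonneg sum_nonneg) auto

lemma abs_div_inv: "0 \<le> (x::real) \<Longrightarrow> \<bar>x / (1 / real n)\<bar> = real n * x"
  by (simp add: abs_mult)

lemma comp2_meas:
  assumes Fm: "(\<lambda>(a, z). F a z) \<in> borel_measurable (A \<Otimes>\<^sub>M borel)"
    and ga: "ga \<in> measurable X A" and gz: "gz \<in> measurable X borel"
  shows "(\<lambda>x. F (ga x) (gz x)) \<in> borel_measurable X"
  using measurable_compose[OF measurable_Pair[OF ga gz] Fm] by simp

lemma sec_fun_meas:
  assumes Fm: "(\<lambda>(a, z). F a z) \<in> borel_measurable (A \<Otimes>\<^sub>M borel)" and a: "a \<in> space A"
  shows "F a \<in> borel_measurable borel"
  using measurable_compose[OF measurable_Pair1'[OF a] Fm] by simp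

locale cor3 =

  fixes M :: "'o measure"
    and P :: "('dx::finite, 'dy::finite, 'dz::finite) obs measure"
    and D :: "nat \<Rightarrow> nat \<Rightarrow> 'o \<Rightarrow> ('dx, 'dy, 'dz) obs"
    and Aux :: "nat \<Rightarrow> 'a measure"
    and aux :: "nat \<Rightarrow> 'o \<Rightarrow> 'a"
    and F :: "nat \<Rightarrow> 'dx \<Rightarrow> 'a \<Rightarrow> real^'dz \<Rightarrow> real"
    and G :: "nat \<Rightarrow> 'dy \<Rightarrow> 'a \<Rightarrow> real^'dz \<Rightarrow> real"
    and f u :: "'dx \<Rightarrow> real^'dz \<Rightarrow> real"
    and g v :: "'dy \<Rightarrow> real^'dz \<Rightarrow> real"
    and w :: "'dx \<Rightarrow> 'dy \<Rightarrow> nat \<Rightarrow> real^'dz \<Rightarrow> real"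
    and K :: "'dx \<Rightarrow> 'dy \<Rightarrow> nat"
    and C :: real
  assumes M: "prob_space M"
    and P: "prob_space P" "sets P = sets borel" "absolutely_continuous lborel P"
    and data_rv: "\<And>n i. i < n \<Longrightarrow> D n i \<in> borel_measurable M"
    and data_dist: "\<And>n i. i < n \<Longrightarrow> distr M borel (D n i) = P"
    and data_indep: "\<And>n. prob_space.indep_vars M (\<lambda>_. borel) (D n) {..<n}"
    and aux_rv: "\<And>n. aux n \<in> measurable M (Aux n)"
    and aux_indep: "\<And>n A B. A \<in> sets (Aux n) \<Longrightarrow> B \<in> sets (PiM {..<n} (\<lambda>_. borel)) \<Longrightarrow>
          measure M {\<omega>\<in>space M. aux n \<omega> \<in> A \<and> (\<lambda>i\<in>{..<n}. D n i \<omega>) \<in> B}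
        = measure M {\<omega>\<in>space M. aux n \<omega> \<in> A} * measure M {\<omega>\<in>space M. (\<lambda>i\<in>{..<n}. D n i \<omega>) \<in> B}"
    and F_meas: "\<And>n j. (\<lambda>(a, z). F n j a z) \<in> borel_measurable (Aux n \<Otimes>\<^sub>M borel)"
    and G_meas: "\<And>n l. (\<lambda>(a, z). G n l a z) \<in> borel_measurable (Aux n \<Otimes>\<^sub>M borel)"
    and f: "\<And>j. regr_fun P (\<lambda>t. snd (snd t)) (\<lambda>t. fst t $ j) (f j)"
    and g: "\<And>l. regr_fun P (\<lambda>t. snd (snd t)) (\<lambda>t. fst (snd t) $ l) (g l)"
    and u: "\<And>j. nn_regr_fun P (\<lambda>t. snd (snd t))
                 (\<lambda>t. (fst t $ j - f j (snd (snd t)))^2) (u j)"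
    and v: "\<And>l. nn_regr_fun P (\<lambda>t. snd (snd t))
                 (\<lambda>t. (fst (snd t) $ l - g l (snd (snd t)))^2) (v l)"
    and w_meas: "\<And>j l k. w j l k \<in> borel_measurable borel"
    and C: "C > 0" "\<And>j l k z. \<bar>w j l k z\<bar> \<le> C"
    and A_rate: "\<And>j l. oP M (\<lambda>n \<omega>.
          Aerr n (f j) (F n j (aux n \<omega>)) (\<lambda>i. snd (snd (D n i \<omega>)))
        * Aerr n (g l) (G n l (aux n \<omega>)) (\<lambda>i. snd (snd (D n i \<omega>)))) (\<lambda>n. 1 / real n)"
    and Bf: "\<And>j l. oP M (\<lambda>n \<omega>.
          Berr n (f j) (F n j (aux n \<omega>)) (v l) (\<lambda>i. snd (snd (D n i \<omega>)))) (\<lambda>n. 1)"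
    and Bg: "\<And>j l. oP M (\<lambda>n \<omega>.
          Berr n (g l) (G n l (aux n \<omega>)) (u j) (\<lambda>i. snd (snd (D n i \<omega>)))) (\<lambda>n. 1)"
    and pos: "\<And>j l k. k \<in> {1..K j l} \<Longrightarrow>
          (\<integral>\<^sup>+t. ennreal ((fst t $ j - f j (snd (snd t)))^2 * (fst (snd t) $ l - g l (snd (snd t)))^2
                          * (w j l k (snd (snd t)))^2) \<partial>P) > 0"
    and fin: "\<And>j l.
          (\<integral>\<^sup>+t. ennreal ((fst t $ j - f j (snd (snd t)))^2 * (fst (snd t) $ l - g l (snd (snd t)))^2) \<partial>P) < \<infinity>"
    and alt: "\<exists>j l. \<exists>k\<in>{1..K j l}.
          (\<integral>t. (fst t $ j - f j (snd (snd t))) * (fst (snd t) $ l - g l (snd (snd t)))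
                 * w j l k (snd (snd t)) \<partial>P) \<noteq> 0"

begin


lemma main: "\<forall>c>0. (\<lambda>n. measure M {\<omega>\<in>space M.
            c \<le> Sstat n w K (\<lambda>j. F n j (aux n \<omega>)) (\<lambda>l. G n l (aux n \<omega>)) (\<lambda>i. D n i \<omega>)})
          \<longlonglongrightarrow> 1"
proof (intro allI impI)
  fix c :: real assume c: "0 < c"
  interpret Mp: prob_space M by (rule M)
  interpret Pp: prob_space P by (rule P(1))
  obtain j0 l0 k0 where k0: "k0 \<in> {1..K j0 l0}" and mu0:
    "(\<integral>t. (fst t $ j0 - f j0 (snd (snd t))) * (fst (snd t) $ l0 - g l0 (snd (snd t))) * w j0 l0 k0 (snd (snd t)) \<partial>P) \<noteq> 0"
    using alt by blast

  define \<mu> where "\<mu> = (\<integral>t. (fst t $ j0 - f j0 (snd (snd t))) * (fst (snd t) $ l0 - g l0 (snd (snd t))) * w j0 l0 k0 (snd (snd t)) \<partial>P)"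
  have mu: "\<mu> \<noteq> 0" using mu0 by (simp add: \<mu>_def)
  note om = obs_meas[OF P(2)]
  have [measurable]: "(\<lambda>t::('dx, 'dy, 'dz) obs. snd (snd t)) \<in> measurable P borel" by (rule om(1))
  have [measurable]: "\<And>j. (\<lambda>t::('dx, 'dy, 'dz) obs. fst t $ j) \<in> borel_measurable P" by (rule om(2))
  have [measurable]: "\<And>l. (\<lambda>t::('dx, 'dy, 'dz) obs. fst (snd t) $ l) \<in> borel_measurable P" by (rule om(3))
  have fm[measurable]: "\<And>j. f j \<in> borel_measurable borel" using f unfolding regr_fun_def by auto
  have gm[measurable]: "\<And>l. g l \<in> borel_measurable borel" using g unfolding regr_fun_def by auto
  have um[measurable]: "\<And>j. u j \<in> borel_measurable borel" and unn: "\<And>j z. 0 \<le> u j z"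
    using u unfolding nn_regr_fun_def by auto
  have vm[measurable]: "\<And>l. v l \<in> borel_measurable borel" and vnn: "\<And>l z. 0 \<le> v l z"
    using v unfolding nn_regr_fun_def by auto
  note wm[measurable] = w_meas
  have TSe: "\<And>h. h \<in> borel_measurable borel \<Longrightarrow> (\<integral>t. h (snd (snd t)) * (fst t $ j0 - f j0 (snd (snd t))) \<partial>P) = 0"
    by (rule signed_tower[OF f[of j0]]) measurable
  have TSx: "\<And>h. h \<in> borel_measurable borel \<Longrightarrow> (\<integral>t. h (snd (snd t)) * (fst (snd t) $ l0 - g l0 (snd (snd t))) \<partial>P) = 0"
    by (rule signed_tower[OF g[of l0]]) measurable
  have TNe: "\<And>h. h \<in> borel_measurable borel \<Longrightarrow>
      (\<integral>\<^sup>+t. h (snd (snd t)) * ennreal ((fst t $ j0 - f j0 (snd (snd t)))^2) \<partial>P) = (\<integral>\<^sup>+t. h (snd (snd t)) * ennreal (u j0 (snd (snd t))) \<partial>P)"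
    by (rule nn_tower[OF u[of j0]]) measurable
  have TNx: "\<And>h. h \<in> borel_measurable borel \<Longrightarrow>
      (\<integral>\<^sup>+t. h (snd (snd t)) * ennreal ((fst (snd t) $ l0 - g l0 (snd (snd t)))^2) \<partial>P) = (\<integral>\<^sup>+t. h (snd (snd t)) * ennreal (v l0 (snd (snd t))) \<partial>P)"
    by (rule nn_tower[OF v[of l0]]) measurable
  define E2 where "E2 t = (fst t $ j0 - f j0 (snd (snd t)))^2 * (fst (snd t) $ l0 - g l0 (snd (snd t)))^2" for t :: "('dx, 'dy, 'dz) obs"
  have E2m[measurable]: "E2 \<in> borel_measurable P" unfolding E2_def by measurable
  have E2nn: "0 \<le> E2 t" for t unfolding E2_def by simp
  have finE2: "(\<integral>\<^sup>+t. ennreal (E2 t) \<partial>P) < \<infinity>" using fin[of j0 l0] unfolding E2_def by simp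
  have iE2: "integrable P E2" unfolding integrable_iff_bounded using finE2 E2nn by simp
  define V0r where "V0r = enn2real (\<integral>\<^sup>+t. ennreal (E2 t) \<partial>P)"
  have V0: "(\<integral>\<^sup>+t. ennreal (E2 t) \<partial>P) = ennreal V0r" "0 \<le> V0r"
    using finE2 by (auto simp: V0r_def ennreal_enn2real_if)
  have C0: "0 < C" using C(1) .
  define Wt where "Wt = w j0 l0 k0"
  have Wm[measurable]: "Wt \<in> borel_measurable borel" unfolding Wt_def by measurable
  have WC: "\<And>z. \<bar>Wt z\<bar> \<le> C" unfolding Wt_def using C(2) .
  have iY: "integrable P (\<lambda>t. ((fst t $ j0 - f j0 (snd (snd t))) * (fst (snd t) $ l0 - g l0 (snd (snd t))) * Wt (snd (snd t)) - \<mu>)^2)"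
  proof (rule Bochner_Integration.integrable_bound[of _ "\<lambda>t. 2 * C^2 * E2 t + 2 * \<mu>^2"])
    show "integrable P (\<lambda>t. 2 * C^2 * E2 t + 2 * \<mu>^2)" using iE2 by simp
    show "AE t in P. norm (((fst t $ j0 - f j0 (snd (snd t))) * (fst (snd t) $ l0 - g l0 (snd (snd t))) * Wt (snd (snd t)) - \<mu>)^2) \<le> norm (2 * C^2 * E2 t + 2 * \<mu>^2)"
    proof (rule AE_I2)
      fix t
      define p where "p = (fst t $ j0 - f j0 (snd (snd t))) * (fst (snd t) $ l0 - g l0 (snd (snd t)))"
      have w2: "(Wt (snd (snd t)))^2 \<le> C^2" using power_mono[OF WC[of "snd (snd t)"] abs_ge_zero, of 2] by simp
      have a: "(p * Wt (snd (snd t)) - \<mu>)^2 \<le> 2 * (p * Wt (snd (snd t)))^2 + 2 * \<mu>^2"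
        using sum_squares_ge_zero[of "p * Wt (snd (snd t)) + \<mu>" 0] by (simp add: power2_eq_square algebra_simps)
      have b: "(p * Wt (snd (snd t)))^2 \<le> C^2 * p^2"
      proof -
        have "p^2 * (Wt (snd (snd t)))^2 \<le> p^2 * C^2" using w2 by (intro mult_left_mono) auto
        then show ?thesis by (simp add: power_mult_distrib mult.commute)
      qed
      have E2p: "E2 t = p^2" by (simp add: E2_def p_def power_mult_distrib)
      have "(p * Wt (snd (snd t)) - \<mu>)^2 \<le> 2 * (C^2 * p^2) + 2 * \<mu>^2" using a b by linarith
      then have "(p * Wt (snd (snd t)) - \<mu>)^2 \<le> 2 * C^2 * E2 t + 2 * \<mu>^2" by (simp add: E2p)
      moreover have "0 \<le> 2 * C^2 * E2 t + 2 * \<mu>^2" using E2nn by simp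
      ultimately show "norm (((fst t $ j0 - f j0 (snd (snd t))) * (fst (snd t) $ l0 - g l0 (snd (snd t))) * Wt (snd (snd t)) - \<mu>)^2) \<le> norm (2 * C^2 * E2 t + 2 * \<mu>^2)"
        by (simp add: p_def)
    qed
  qed measurable
  define Var where "Var = (\<integral>t. ((fst t $ j0 - f j0 (snd (snd t))) * (fst (snd t) $ l0 - g l0 (snd (snd t))) * Wt (snd (snd t)) - \<mu>)^2 \<partial>P)"

  have key: "measure M {\<omega>\<in>space M. \<bar>Tstat n (Rvec (F n j0 (aux n \<omega>)) (G n l0 (aux n \<omega>)) Wt j0 l0 (\<lambda>i. D n i \<omega>))\<bar> < c}
      \<le> measure M {\<omega>\<in>space M. 1 < \<bar>Berr n (f j0) (F n j0 (aux n \<omega>)) (v l0) (\<lambda>i. snd (snd (D n i \<omega>))) / 1\<bar>}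
       + measure M {\<omega>\<in>space M. 1 < \<bar>Berr n (g l0) (G n l0 (aux n \<omega>)) (u j0) (\<lambda>i. snd (snd (D n i \<omega>))) / 1\<bar>}
       + measure M {\<omega>\<in>space M. 1 < \<bar>Aerr n (f j0) (F n j0 (aux n \<omega>)) (\<lambda>i. snd (snd (D n i \<omega>)))
                                   * Aerr n (g l0) (G n l0 (aux n \<omega>)) (\<lambda>i. snd (snd (D n i \<omega>))) / (1 / real n)\<bar>}
       + ((64 * Var + 128 * C^2) / (real n * \<mu>^2) + (V0r + 2) / L')"
    if n2: "2 \<le> n" and L': "0 < L'" and hn1: "8 * C \<le> sqrt (real n) * \<bar>\<mu>\<bar>"
      and hn2: "16 * c^2 * C^2 * (3 * L' + 1) \<le> real n * \<mu>^2" for n L'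
  proof -
    define N where "N = PiM {..<n} (\<lambda>_. P)"
    define Dv where "Dv \<omega> = (\<lambda>i\<in>{..<n}. D n i \<omega>)" for \<omega>
    interpret N: prob_space N unfolding N_def by (rule prob_space_PiM) (simp add: P(1))
    have sN: "sets N = sets (PiM {..<n} (\<lambda>_. borel))" unfolding N_def by (rule sets_PiM_cong) (simp_all add: P(2))
    have DP: "D n i \<in> measurable M P" if "i < n" for i
      using data_rv[OF that] measurable_cong_sets[OF refl P(2), of M] by simp
    have Dvm[measurable]: "Dv \<in> measurable M N" unfolding Dv_def N_def
      by (rule measurable_restrict) (use DP in auto)
    have dist: "distr M N Dv = N"
    proof -
      have "prob_space.indep_vars M (\<lambda>_. borel) (D n) {..<n} \<longleftrightarrow>
           distr M (\<Pi>\<^sub>M i\<in>{..<n}. borel) (\<lambda>x. \<lambda>i\<in>{..<n}. D n i x) = (\<Pi>\<^sub>M i\<in>{..<n}. distr M borel (D n i))"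
        using n2 by (intro Mp.indep_vars_iff_distr_eq_PiM') (auto intro: data_rv simp: lessThan_empty_iff)
      then have "distr M (\<Pi>\<^sub>M i\<in>{..<n}. borel) Dv = (\<Pi>\<^sub>M i\<in>{..<n}. distr M borel (D n i))"
        using data_indep[of n] unfolding Dv_def by simp
      also have "\<dots> = N" unfolding N_def by (rule PiM_cong) (auto intro: data_dist)
      finally have e: "distr M (\<Pi>\<^sub>M i\<in>{..<n}. borel) Dv = N" .
      have "distr M N Dv = distr M (\<Pi>\<^sub>M i\<in>{..<n}. borel) Dv" by (rule distr_cong) (simp_all add: sN)
      then show ?thesis using e by simp
    qed
    have indep: "measure M {\<omega>\<in>space M. aux n \<omega> \<in> A \<and> Dv \<omega> \<in> B} = measure M {\<omega>\<in>space M. aux n \<omega> \<in> A} * measure M {\<omega>\<in>space M. Dv \<omega> \<in> B}"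
      if "A \<in> sets (Aux n)" "B \<in> sets N" for A B
      using aux_indep[of A n B] that sN unfolding Dv_def by simp
    have lift': "emeasure M {\<omega>\<in>space M. (aux n \<omega>, Dv \<omega>) \<in> S} = (\<integral>\<^sup>+\<omega>. emeasure N (Pair (aux n \<omega>) -` S) \<partial>M)"
      if "S \<in> sets (Aux n \<Otimes>\<^sub>M N)" for S
      by (rule lift[OF M N.prob_space_axioms aux_rv Dvm dist _ that]) (rule indep)
    define AP where "AP = Aux n \<Otimes>\<^sub>M N"
    have sndi[measurable]: "(\<lambda>p. snd p i) \<in> measurable AP P" if "i \<in> {..<n}" for i
      unfolding AP_def N_def using that by measurable
    have fstm: "fst \<in> measurable AP (Aux n)" unfolding AP_def by simp
    have zi: "(\<lambda>p. snd (snd (snd p i))) \<in> measurable AP borel" if "i \<in> {..<n}" for i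
      using measurable_compose[OF sndi[OF that] om(1)] by simp
    have Fi[measurable]: "(\<lambda>p. F n j (fst p) (snd (snd (snd p i)))) \<in> borel_measurable AP" if "i \<in> {..<n}" for i j
      by (rule comp2_meas[OF F_meas fstm zi[OF that]])
    have Gi[measurable]: "(\<lambda>p. G n l (fst p) (snd (snd (snd p i)))) \<in> borel_measurable AP" if "i \<in> {..<n}" for i l
      by (rule comp2_meas[OF G_meas fstm zi[OF that]])
    define Sb where "Sb = {p\<in>space AP. \<bar>Tstat n (Rvec (F n j0 (fst p)) (G n l0 (fst p)) Wt j0 l0 (snd p))\<bar> < c}"
    define S1 where "S1 = {p\<in>space AP. 1 < Berr n (f j0) (F n j0 (fst p)) (v l0) (\<lambda>i. snd (snd (snd p i)))}"
    define S2 where "S2 = {p\<in>space AP. 1 < Berr n (g l0) (G n l0 (fst p)) (u j0) (\<lambda>i. snd (snd (snd p i)))}"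
    define S3 where "S3 = {p\<in>space AP. 1 < real n * (Aerr n (f j0) (F n j0 (fst p)) (\<lambda>i. snd (snd (snd p i)))
                                  * Aerr n (g l0) (G n l0 (fst p)) (\<lambda>i. snd (snd (snd p i))))}"
    have Sm: "Sb \<in> sets AP" "S1 \<in> sets AP" "S2 \<in> sets AP" "S3 \<in> sets AP"
      unfolding Sb_def S1_def S2_def S3_def Tstat_def Rbar_def Rvec_def Berr_def Aerr_def by measurable
    define \<kappa> where "\<kappa> = (64 * Var + 128 * C^2) / (real n * \<mu>^2) + (V0r + 2) / L'"
    have spAP: "space AP = space (Aux n) \<times> space N" unfolding AP_def by (simp add: space_pair_measure)
    have sec: "Pair a -` {p\<in>space AP. Q (fst p) (snd p)} = {d\<in>space N. Q a d}" if "a \<in> space (Aux n)" for a Q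
      using that by (auto simp: spAP)
    have core_a: "emeasure N (Pair a -` Sb) \<le> emeasure N (Pair a -` S1) + emeasure N (Pair a -` S2) + emeasure N (Pair a -` S3) + ennreal \<kappa>"
      if a: "a \<in> space (Aux n)" for a
    proof -
      have "emeasure N {d\<in>space N. \<bar>Tstat n (Rvec (F n j0 a) (G n l0 a) Wt j0 l0 d)\<bar> < c}
        \<le> emeasure N {d\<in>space N. 1 < Berr n (f j0) (F n j0 a) (v l0) (\<lambda>i. snd (snd (d i)))}
         + emeasure N {d\<in>space N. 1 < Berr n (g l0) (G n l0 a) (u j0) (\<lambda>i. snd (snd (d i)))}
         + emeasure N {d\<in>space N. 1 < real n * (Aerr n (f j0) (F n j0 a) (\<lambda>i. snd (snd (d i))) * Aerr n (g l0) (G n l0 a) (\<lambda>i. snd (snd (d i))))}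
         + ennreal \<kappa>"
        unfolding N_def \<kappa>_def
      proof (rule core[OF P sec_fun_meas[OF F_meas a] sec_fun_meas[OF G_meas a] fm gm um vm Wm unn vnn TSe TSx TNe TNx WC C0 _ mu _ _ _ _ n2 L' c hn1 hn2])
        show "(\<integral>t. (fst t $ j0 - f j0 (snd (snd t))) * (fst (snd t) $ l0 - g l0 (snd (snd t))) * Wt (snd (snd t)) \<partial>P) = \<mu>"
          by (simp add: \<mu>_def Wt_def)
        show "integrable P (\<lambda>t. ((fst t $ j0 - f j0 (snd (snd t))) * (fst (snd t) $ l0 - g l0 (snd (snd t))) * Wt (snd (snd t)) - \<mu>)^2)"
          by (rule iY)
        show "Var = (\<integral>t. ((fst t $ j0 - f j0 (snd (snd t))) * (fst (snd t) $ l0 - g l0 (snd (snd t))) * Wt (snd (snd t)) - \<mu>)^2 \<partial>P)"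
          by (rule Var_def)
        show "(\<integral>\<^sup>+t. ennreal ((fst t $ j0 - f j0 (snd (snd t)))^2 * (fst (snd t) $ l0 - g l0 (snd (snd t)))^2) \<partial>P) = ennreal V0r"
          using V0(1) by (simp add: E2_def)
        show "0 \<le> V0r" by (rule V0(2))
      qed
      then show ?thesis using a unfolding Sb_def S1_def S2_def S3_def by (simp add: spAP)
    qed
    have SAP: "S \<in> sets (Aux n \<Otimes>\<^sub>M N)" if "S \<in> sets AP" for S using that by (simp add: AP_def)
    have secm: "(\<lambda>\<omega>. emeasure N (Pair (aux n \<omega>) -` S)) \<in> borel_measurable M" if "S \<in> sets AP" for S
      using measurable_compose[OF aux_rv N.measurable_emeasure_Pair[OF SAP[OF that]]] by simp
    have auxs: "aux n \<omega> \<in> space (Aux n)" if "\<omega> \<in> space M" for \<omega> using measurable_space[OF aux_rv that] .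
    have "emeasure M {\<omega>\<in>space M. (aux n \<omega>, Dv \<omega>) \<in> Sb} = (\<integral>\<^sup>+\<omega>. emeasure N (Pair (aux n \<omega>) -` Sb) \<partial>M)"
      by (rule lift'[OF SAP[OF Sm(1)]])
    also have "\<dots> \<le> (\<integral>\<^sup>+\<omega>. (emeasure N (Pair (aux n \<omega>) -` S1) + emeasure N (Pair (aux n \<omega>) -` S2)
                    + emeasure N (Pair (aux n \<omega>) -` S3)) + ennreal \<kappa> \<partial>M)"
      by (intro nn_integral_mono core_a auxs)
    also have "\<dots> = (\<integral>\<^sup>+\<omega>. emeasure N (Pair (aux n \<omega>) -` S1) + emeasure N (Pair (aux n \<omega>) -` S2)
                    + emeasure N (Pair (aux n \<omega>) -` S3) \<partial>M) + (\<integral>\<^sup>+\<omega>. ennreal \<kappa> \<partial>M)"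
      by (rule nn_integral_add) (use secm Sm in auto)
    also have "(\<integral>\<^sup>+\<omega>. emeasure N (Pair (aux n \<omega>) -` S1) + emeasure N (Pair (aux n \<omega>) -` S2)
                    + emeasure N (Pair (aux n \<omega>) -` S3) \<partial>M)
        = (\<integral>\<^sup>+\<omega>. emeasure N (Pair (aux n \<omega>) -` S1) + emeasure N (Pair (aux n \<omega>) -` S2) \<partial>M)
          + (\<integral>\<^sup>+\<omega>. emeasure N (Pair (aux n \<omega>) -` S3) \<partial>M)"
      by (rule nn_integral_add) (use secm Sm in auto)
    also have "(\<integral>\<^sup>+\<omega>. emeasure N (Pair (aux n \<omega>) -` S1) + emeasure N (Pair (aux n \<omega>) -` S2) \<partial>M)
        = (\<integral>\<^sup>+\<omega>. emeasure N (Pair (aux n \<omega>) -` S1) \<partial>M) + (\<integral>\<^sup>+\<omega>. emeasure N (Pair (aux n \<omega>) -` S2) \<partial>M)"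
      by (rule nn_integral_add) (use secm Sm in auto)
    also have "(\<integral>\<^sup>+\<omega>. ennreal \<kappa> \<partial>M) = ennreal \<kappa>" by (simp add: Mp.emeasure_space_1)
    finally have int: "emeasure M {\<omega>\<in>space M. (aux n \<omega>, Dv \<omega>) \<in> Sb}
        \<le> emeasure M {\<omega>\<in>space M. (aux n \<omega>, Dv \<omega>) \<in> S1} + emeasure M {\<omega>\<in>space M. (aux n \<omega>, Dv \<omega>) \<in> S2}
          + emeasure M {\<omega>\<in>space M. (aux n \<omega>, Dv \<omega>) \<in> S3} + ennreal \<kappa>"
      by (simp add: lift'[OF SAP[OF Sm(2)]] lift'[OF SAP[OF Sm(3)]] lift'[OF SAP[OF Sm(4)]])
    have kpos: "0 \<le> \<kappa>"
    proof -
      have "0 \<le> Var" unfolding Var_def by simp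
      then show ?thesis unfolding \<kappa>_def using V0(2) L' by (intro add_nonneg_nonneg divide_nonneg_nonneg) auto
    qed
    have meas_int: "measure M {\<omega>\<in>space M. (aux n \<omega>, Dv \<omega>) \<in> Sb}
        \<le> measure M {\<omega>\<in>space M. (aux n \<omega>, Dv \<omega>) \<in> S1} + measure M {\<omega>\<in>space M. (aux n \<omega>, Dv \<omega>) \<in> S2}
          + measure M {\<omega>\<in>space M. (aux n \<omega>, Dv \<omega>) \<in> S3} + \<kappa>"
      using int kpos by (simp add: Mp.emeasure_eq_measure ennreal_plus[symmetric] del: ennreal_plus)
    have Dvs: "Dv \<omega> \<in> space N" if "\<omega> \<in> space M" for \<omega> using measurable_space[OF Dvm that] .
    have DvD: "\<And>i. i < n \<Longrightarrow> Dv \<omega> i = D n i \<omega>" for \<omega> by (simp add: Dv_def)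
    have setb: "{\<omega>\<in>space M. (aux n \<omega>, Dv \<omega>) \<in> Sb} = {\<omega>\<in>space M. \<bar>Tstat n (Rvec (F n j0 (aux n \<omega>)) (G n l0 (aux n \<omega>)) Wt j0 l0 (\<lambda>i. D n i \<omega>))\<bar> < c}"
    proof -
      have "Tstat n (Rvec (F n j0 (aux n \<omega>)) (G n l0 (aux n \<omega>)) Wt j0 l0 (Dv \<omega>)) = Tstat n (Rvec (F n j0 (aux n \<omega>)) (G n l0 (aux n \<omega>)) Wt j0 l0 (\<lambda>i. D n i \<omega>))" for \<omega>
        by (rule Tstat_cong) (simp add: Rvec_def DvD)
      then show ?thesis unfolding Sb_def using auxs Dvs by (auto simp: spAP)
    qed
    have set1: "{\<omega>\<in>space M. (aux n \<omega>, Dv \<omega>) \<in> S1} = {\<omega>\<in>space M. 1 < \<bar>Berr n (f j0) (F n j0 (aux n \<omega>)) (v l0) (\<lambda>i. snd (snd (D n i \<omega>))) / 1\<bar>}"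
    proof -
      have "Berr n (f j0) (F n j0 (aux n \<omega>)) (v l0) (\<lambda>i. snd (snd (Dv \<omega> i))) = Berr n (f j0) (F n j0 (aux n \<omega>)) (v l0) (\<lambda>i. snd (snd (D n i \<omega>)))" for \<omega>
        by (rule Berr_cong) (simp add: DvD)
      moreover have "\<bar>Berr n (f j0) (F n j0 (aux n \<omega>)) (v l0) (\<lambda>i. snd (snd (D n i \<omega>))) / 1\<bar> = Berr n (f j0) (F n j0 (aux n \<omega>)) (v l0) (\<lambda>i. snd (snd (D n i \<omega>)))" for \<omega>
        using Berr_nn[of "v l0", OF vnn] by simp
      ultimately show ?thesis unfolding S1_def using auxs Dvs by (auto simp: spAP)
    qed
    have set2: "{\<omega>\<in>space M. (aux n \<omega>, Dv \<omega>) \<in> S2} = {\<omega>\<in>space M. 1 < \<bar>Berr n (g l0) (G n l0 (aux n \<omega>)) (u j0) (\<lambda>i. snd (snd (D n i \<omega>))) / 1\<bar>}"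
    proof -
      have "Berr n (g l0) (G n l0 (aux n \<omega>)) (u j0) (\<lambda>i. snd (snd (Dv \<omega> i))) = Berr n (g l0) (G n l0 (aux n \<omega>)) (u j0) (\<lambda>i. snd (snd (D n i \<omega>)))" for \<omega>
        by (rule Berr_cong) (simp add: DvD)
      moreover have "\<bar>Berr n (g l0) (G n l0 (aux n \<omega>)) (u j0) (\<lambda>i. snd (snd (D n i \<omega>))) / 1\<bar> = Berr n (g l0) (G n l0 (aux n \<omega>)) (u j0) (\<lambda>i. snd (snd (D n i \<omega>)))" for \<omega>
        using Berr_nn[of "u j0", OF unn] by simp
      ultimately show ?thesis unfolding S2_def using auxs Dvs by (auto simp: spAP)
    qed
    have set3: "{\<omega>\<in>space M. (aux n \<omega>, Dv \<omega>) \<in> S3} = {\<omega>\<in>space M. 1 < \<bar>Aerr n (f j0) (F n j0 (aux n \<omega>)) (\<lambda>i. snd (snd (D n i \<omega>)))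
                                   * Aerr n (g l0) (G n l0 (aux n \<omega>)) (\<lambda>i. snd (snd (D n i \<omega>))) / (1 / real n)\<bar>}"
    proof -
      have "Aerr n (f j0) (F n j0 (aux n \<omega>)) (\<lambda>i. snd (snd (Dv \<omega> i))) = Aerr n (f j0) (F n j0 (aux n \<omega>)) (\<lambda>i. snd (snd (D n i \<omega>)))" for \<omega>
        by (rule Aerr_cong) (simp add: DvD)
      moreover have "Aerr n (g l0) (G n l0 (aux n \<omega>)) (\<lambda>i. snd (snd (Dv \<omega> i))) = Aerr n (g l0) (G n l0 (aux n \<omega>)) (\<lambda>i. snd (snd (D n i \<omega>)))" for \<omega>
        by (rule Aerr_cong) (simp add: DvD)
      ultimately show ?thesis unfolding S3_def abs_div_inv[OF mult_nonneg_nonneg[OF Aerr_nn Aerr_nn]]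
        using auxs Dvs by (auto simp: spAP)
    qed
    show ?thesis using meas_int unfolding setb set1 set2 set3 \<kappa>_def .




  qed

  have DPm: "D n i \<in> measurable M P" if "i < n" for n i
    using data_rv[OF that] measurable_cong_sets[OF refl P(2), of M] by simp
  have Tm: "(\<lambda>\<omega>. Tstat n (Rvec (F n j (aux n \<omega>)) (G n l (aux n \<omega>)) (w j l k) j l (\<lambda>i. D n i \<omega>))) \<in> borel_measurable M"
    for n j l k
  proof -
    have zM: "(\<lambda>\<omega>. snd (snd (D n i \<omega>))) \<in> measurable M borel" if "i \<in> {..<n}" for i
      using measurable_compose[OF DPm om(1)] that by simp
    have [measurable]: "(\<lambda>\<omega>. F n j (aux n \<omega>) (snd (snd (D n i \<omega>)))) \<in> borel_measurable M" if "i \<in> {..<n}" for i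
      by (rule comp2_meas[OF F_meas aux_rv zM[OF that]])
    have [measurable]: "(\<lambda>\<omega>. G n l (aux n \<omega>) (snd (snd (D n i \<omega>)))) \<in> borel_measurable M" if "i \<in> {..<n}" for i
      by (rule comp2_meas[OF G_meas aux_rv zM[OF that]])
    have [measurable]: "(\<lambda>\<omega>. w j l k (snd (snd (D n i \<omega>)))) \<in> borel_measurable M" if "i \<in> {..<n}" for i
      using measurable_compose[OF zM[OF that] w_meas] by simp
    have [measurable]: "(\<lambda>\<omega>. fst (D n i \<omega>) $ j) \<in> borel_measurable M" if "i \<in> {..<n}" for i
      using measurable_compose[OF DPm om(2)] that by simp
    have [measurable]: "(\<lambda>\<omega>. fst (snd (D n i \<omega>)) $ l) \<in> borel_measurable M" if "i \<in> {..<n}" for i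
      using measurable_compose[OF DPm om(3)] that by simp
    show ?thesis unfolding Tstat_def Rbar_def Rvec_def by measurable
  qed

  define Idx where "Idx = Sigma (UNIV::'dx set) (\<lambda>j. Sigma (UNIV::'dy set) (\<lambda>l. {1..K j l}))"
  have finIdx: "finite Idx" unfolding Idx_def by (intro finite_SigmaI) auto
  have p0: "(j0, l0, k0) \<in> Idx" using k0 by (simp add: Idx_def)
  define Tf where "Tf n p \<omega> = \<bar>Tstat n (Rvec (F n (fst p) (aux n \<omega>)) (G n (fst (snd p)) (aux n \<omega>)) (w (fst p) (fst (snd p)) (snd (snd p))) (fst p) (fst (snd p)) (\<lambda>i. D n i \<omega>))\<bar>" for n p \<omega>
  have Sst: "Sstat n w K (\<lambda>j. F n j (aux n \<omega>)) (\<lambda>l. G n l (aux n \<omega>)) (\<lambda>i. D n i \<omega>) = Max ((\<lambda>p. Tf n p \<omega>) ` Idx)" for n \<omega>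
  proof -
    have "{\<bar>Tstat n (Rvec (F n j (aux n \<omega>)) (G n l (aux n \<omega>)) (w j l k) j l (\<lambda>i. D n i \<omega>))\<bar> | j l k. k \<in> {1..K j l}}
        = (\<lambda>p. Tf n p \<omega>) ` Idx"
      unfolding Tf_def Idx_def by (auto simp: image_def) (force | blast)+
    then show ?thesis unfolding Sstat_def by simp
  qed
  have good_iff: "c \<le> Sstat n w K (\<lambda>j. F n j (aux n \<omega>)) (\<lambda>l. G n l (aux n \<omega>)) (\<lambda>i. D n i \<omega>) \<longleftrightarrow> (\<exists>p\<in>Idx. c \<le> Tf n p \<omega>)" for n \<omega>
    unfolding Sst using finIdx p0 by (subst Max_ge_iff) auto
  have Tfm: "(\<lambda>\<omega>. Tf n p \<omega>) \<in> borel_measurable M" for n p unfolding Tf_def using Tm by measurable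
  have goodm: "{\<omega>\<in>space M. c \<le> Sstat n w K (\<lambda>j. F n j (aux n \<omega>)) (\<lambda>l. G n l (aux n \<omega>)) (\<lambda>i. D n i \<omega>)} \<in> sets M" for n
  proof -
    have "Measurable.pred M (\<lambda>\<omega>. \<exists>p\<in>Idx. c \<le> Tf n p \<omega>)"
      by (intro pred_intros_finite(4) finIdx) (use Tfm in measurable)
    then show ?thesis unfolding good_iff pred_def by simp
  qed
  define Bad where "Bad n = {\<omega>\<in>space M. \<bar>Tstat n (Rvec (F n j0 (aux n \<omega>)) (G n l0 (aux n \<omega>)) Wt j0 l0 (\<lambda>i. D n i \<omega>))\<bar> < c}" for n
  have Badm: "Bad n \<in> sets M" for n
  proof -
    have "(\<lambda>\<omega>. \<bar>Tstat n (Rvec (F n j0 (aux n \<omega>)) (G n l0 (aux n \<omega>)) Wt j0 l0 (\<lambda>i. D n i \<omega>))\<bar>) \<in> borel_measurable M"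
      using Tm[of n j0 l0 k0] unfolding Wt_def by measurable
    then show ?thesis unfolding Bad_def by measurable
  qed
  have lower: "1 - measure M (Bad n) \<le> measure M {\<omega>\<in>space M. c \<le> Sstat n w K (\<lambda>j. F n j (aux n \<omega>)) (\<lambda>l. G n l (aux n \<omega>)) (\<lambda>i. D n i \<omega>)}" for n
  proof -
    have "space M - Bad n \<subseteq> {\<omega>\<in>space M. c \<le> Sstat n w K (\<lambda>j. F n j (aux n \<omega>)) (\<lambda>l. G n l (aux n \<omega>)) (\<lambda>i. D n i \<omega>)}"
    proof
      fix \<omega> assume "\<omega> \<in> space M - Bad n"
      then have "\<omega> \<in> space M" "c \<le> Tf n (j0, l0, k0) \<omega>" by (auto simp: Bad_def Tf_def Wt_def)
      then show "\<omega> \<in> {\<omega>\<in>space M. c \<le> Sstat n w K (\<lambda>j. F n j (aux n \<omega>)) (\<lambda>l. G n l (aux n \<omega>)) (\<lambda>i. D n i \<omega>)}"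
        using good_iff p0 by blast
    qed
    then have "measure M (space M - Bad n) \<le> measure M {\<omega>\<in>space M. c \<le> Sstat n w K (\<lambda>j. F n j (aux n \<omega>)) (\<lambda>l. G n l (aux n \<omega>)) (\<lambda>i. D n i \<omega>)}"
      by (intro Mp.finite_measure_mono goodm)
    moreover have "measure M (space M - Bad n) = 1 - measure M (Bad n)" by (rule Mp.prob_compl[OF Badm])
    ultimately show ?thesis by simp
  qed
  have bad_lim: "(\<lambda>n. measure M (Bad n)) \<longlonglongrightarrow> 0"
  proof (rule order_tendstoI)
    fix a :: real assume "a < 0"
    then show "\<forall>\<^sub>F n in sequentially. a < measure M (Bad n)"
      by (intro always_eventually allI) (simp add: less_le_trans[OF _ measure_nonneg])
  next
    fix r :: real assume r: "0 < r"
    define L' where "L' = 4 * (V0r + 2) / r + 1"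
    have L'pos: "0 < L'" unfolding L'_def using r V0(2) by (intro add_nonneg_pos divide_nonneg_pos) auto
    have small: "(V0r + 2) / L' < r / 4"
    proof -
      have "4 * (V0r + 2) < r * L'" unfolding L'_def using r by (simp add: field_simps)
      then show ?thesis using L'pos r by (simp add: field_simps)
    qed
    have r8: "0 < r / 8" using r by simp
    have p1: "(\<lambda>n. measure M {\<omega>\<in>space M. 1 < \<bar>Berr n (f j0) (F n j0 (aux n \<omega>)) (v l0) (\<lambda>i. snd (snd (D n i \<omega>))) / 1\<bar>}) \<longlonglongrightarrow> 0"
      using Bf[where j=j0 and l=l0] zero_less_one unfolding oP_def by blast
    have p2: "(\<lambda>n. measure M {\<omega>\<in>space M. 1 < \<bar>Berr n (g l0) (G n l0 (aux n \<omega>)) (u j0) (\<lambda>i. snd (snd (D n i \<omega>))) / 1\<bar>}) \<longlonglongrightarrow> 0"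
      using Bg[where j=j0 and l=l0] zero_less_one unfolding oP_def by blast
    have p3: "(\<lambda>n. measure M {\<omega>\<in>space M. 1 < \<bar>Aerr n (f j0) (F n j0 (aux n \<omega>)) (\<lambda>i. snd (snd (D n i \<omega>)))
                                   * Aerr n (g l0) (G n l0 (aux n \<omega>)) (\<lambda>i. snd (snd (D n i \<omega>))) / (1 / real n)\<bar>}) \<longlonglongrightarrow> 0"
      using A_rate[where j=j0 and l=l0] zero_less_one unfolding oP_def by blast
    define Kc where "Kc = 64 * Var + 128 * C^2"
    have kt: "(\<lambda>n. Kc / (real n * \<mu>^2)) \<longlonglongrightarrow> 0"
    proof -
      have "(\<lambda>n. (Kc / \<mu>^2) * inverse (real n)) \<longlonglongrightarrow> (Kc / \<mu>^2) * 0"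
        by (intro tendsto_intros lim_inverse_n)
      moreover have "Kc / (real n * \<mu>^2) = (Kc / \<mu>^2) * inverse (real n)" for n
        by (simp add: divide_inverse inverse_mult_distrib mult_ac)
      ultimately show ?thesis by simp
    qed
    have sq: "filterlim (\<lambda>n. sqrt (real n)) at_top sequentially"
      by (rule filterlim_compose[OF sqrt_at_top filterlim_real_sequentially])
    have ev1: "\<forall>\<^sub>F n in sequentially. 8 * C / \<bar>\<mu>\<bar> \<le> sqrt (real n)" using sq unfolding filterlim_at_top by blast
    have ev2: "\<forall>\<^sub>F n in sequentially. 16 * c^2 * C^2 * (3 * L' + 1) / \<mu>^2 \<le> real n"
      using filterlim_real_sequentially unfolding filterlim_at_top by blast
    have ev3: "\<forall>\<^sub>F n in sequentially. 2 \<le> n" by (rule eventually_ge_at_top)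
    have mu2: "0 < \<mu>^2" using mu by simp
    have mua: "0 < \<bar>\<mu>\<bar>" using mu by simp
    show "\<forall>\<^sub>F n in sequentially. measure M (Bad n) < r"
      using ev1 ev2 ev3 order_tendstoD(2)[OF p1 r8] order_tendstoD(2)[OF p2 r8] order_tendstoD(2)[OF p3 r8] order_tendstoD(2)[OF kt r8]
    proof eventually_elim
      case (elim n)
      have hn1: "8 * C \<le> sqrt (real n) * \<bar>\<mu>\<bar>" using elim(1) mua by (simp add: pos_divide_le_eq)
      have hn2: "16 * c^2 * C^2 * (3 * L' + 1) \<le> real n * \<mu>^2" using elim(2) mu2 by (simp add: pos_divide_le_eq)
      note bd = key[OF elim(3) L'pos hn1 hn2, folded Bad_def]
      show ?case using bd elim(4) elim(5) elim(6) elim(7)[unfolded Kc_def] small r by linarith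
    qed
  qed

  show "(\<lambda>n. measure M {\<omega>\<in>space M.
            c \<le> Sstat n w K (\<lambda>j. F n j (aux n \<omega>)) (\<lambda>l. G n l (aux n \<omega>)) (\<lambda>i. D n i \<omega>)}) \<longlonglongrightarrow> 1"
  proof (rule tendsto_sandwich[of "\<lambda>n. 1 - measure M (Bad n)" _ _ "\<lambda>n. 1"])
    show "\<forall>\<^sub>F n in sequentially. 1 - measure M (Bad n) \<le> measure M {\<omega>\<in>space M. c \<le> Sstat n w K (\<lambda>j. F n j (aux n \<omega>)) (\<lambda>l. G n l (aux n \<omega>)) (\<lambda>i. D n i \<omega>)}"
      using lower by simp
    show "\<forall>\<^sub>F n in sequentially. measure M {\<omega>\<in>space M. c \<le> Sstat n w K (\<lambda>j. F n j (aux n \<omega>)) (\<lambda>l. G n l (aux n \<omega>)) (\<lambda>i. D n i \<omega>)} \<le> 1"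
      by (simp add: Mp.prob_le_1)
    show "(\<lambda>n. 1 - measure M (Bad n)) \<longlonglongrightarrow> 1" using tendsto_diff[OF tendsto_const bad_lim, of 1] by simp
  qed simp
qed


end

theorem corollary3:
  fixes M :: "'o measure"
    and P :: "('dx::finite, 'dy::finite, 'dz::finite) obs measure"
    and D :: "nat \<Rightarrow> nat \<Rightarrow> 'o \<Rightarrow> ('dx, 'dy, 'dz) obs"
    and Aux :: "nat \<Rightarrow> 'a measure"
    and aux :: "nat \<Rightarrow> 'o \<Rightarrow> 'a"
    and F :: "nat \<Rightarrow> 'dx \<Rightarrow> 'a \<Rightarrow> real^'dz \<Rightarrow> real"
    and G :: "nat \<Rightarrow> 'dy \<Rightarrow> 'a \<Rightarrow> real^'dz \<Rightarrow> real"
    and f u :: "'dx \<Rightarrow> real^'dz \<Rightarrow> real"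
    and g v :: "'dy \<Rightarrow> real^'dz \<Rightarrow> real"
    and w :: "'dx \<Rightarrow> 'dy \<Rightarrow> nat \<Rightarrow> real^'dz \<Rightarrow> real"
    and K :: "'dx \<Rightarrow> 'dy \<Rightarrow> nat"
    and C :: real
  assumes M: "prob_space M"
    and P: "prob_space P" "sets P = sets borel" "absolutely_continuous lborel P"
    and data_rv: "\<And>n i. i < n \<Longrightarrow> D n i \<in> borel_measurable M"
    and data_dist: "\<And>n i. i < n \<Longrightarrow> distr M borel (D n i) = P"
    and data_indep: "\<And>n. prob_space.indep_vars M (\<lambda>_. borel) (D n) {..<n}"
    and aux_rv: "\<And>n. aux n \<in> measurable M (Aux n)"
    and aux_indep: "\<And>n A B. A \<in> sets (Aux n) \<Longrightarrow> B \<in> sets (PiM {..<n} (\<lambda>_. borel)) \<Longrightarrow>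
          measure M {\<omega>\<in>space M. aux n \<omega> \<in> A \<and> (\<lambda>i\<in>{..<n}. D n i \<omega>) \<in> B}
        = measure M {\<omega>\<in>space M. aux n \<omega> \<in> A} * measure M {\<omega>\<in>space M. (\<lambda>i\<in>{..<n}. D n i \<omega>) \<in> B}"
    and F_meas: "\<And>n j. (\<lambda>(a, z). F n j a z) \<in> borel_measurable (Aux n \<Otimes>\<^sub>M borel)"
    and G_meas: "\<And>n l. (\<lambda>(a, z). G n l a z) \<in> borel_measurable (Aux n \<Otimes>\<^sub>M borel)"
    and f: "\<And>j. regr_fun P (\<lambda>t. snd (snd t)) (\<lambda>t. fst t $ j) (f j)"
    and g: "\<And>l. regr_fun P (\<lambda>t. snd (snd t)) (\<lambda>t. fst (snd t) $ l) (g l)"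
    and u: "\<And>j. nn_regr_fun P (\<lambda>t. snd (snd t))
                 (\<lambda>t. (fst t $ j - f j (snd (snd t)))^2) (u j)"
    and v: "\<And>l. nn_regr_fun P (\<lambda>t. snd (snd t))
                 (\<lambda>t. (fst (snd t) $ l - g l (snd (snd t)))^2) (v l)"
    and w_meas: "\<And>j l k. w j l k \<in> borel_measurable borel"
    and C: "C > 0" "\<And>j l k z. \<bar>w j l k z\<bar> \<le> C"
    and A_rate: "\<And>j l. oP M (\<lambda>n \<omega>.
          Aerr n (f j) (F n j (aux n \<omega>)) (\<lambda>i. snd (snd (D n i \<omega>)))
        * Aerr n (g l) (G n l (aux n \<omega>)) (\<lambda>i. snd (snd (D n i \<omega>)))) (\<lambda>n. 1 / real n)"
    and Bf: "\<And>j l. oP M (\<lambda>n \<omega>.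
          Berr n (f j) (F n j (aux n \<omega>)) (v l) (\<lambda>i. snd (snd (D n i \<omega>)))) (\<lambda>n. 1)"
    and Bg: "\<And>j l. oP M (\<lambda>n \<omega>.
          Berr n (g l) (G n l (aux n \<omega>)) (u j) (\<lambda>i. snd (snd (D n i \<omega>)))) (\<lambda>n. 1)"
    and pos: "\<And>j l k. k \<in> {1..K j l} \<Longrightarrow>
          (\<integral>\<^sup>+t. ennreal ((fst t $ j - f j (snd (snd t)))^2 * (fst (snd t) $ l - g l (snd (snd t)))^2
                          * (w j l k (snd (snd t)))^2) \<partial>P) > 0"
    and fin: "\<And>j l.
          (\<integral>\<^sup>+t. ennreal ((fst t $ j - f j (snd (snd t)))^2 * (fst (snd t) $ l - g l (snd (snd t)))^2) \<partial>P) < \<infinity>"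
    and alt: "\<exists>j l. \<exists>k\<in>{1..K j l}.
          (\<integral>t. (fst t $ j - f j (snd (snd t))) * (fst (snd t) $ l - g l (snd (snd t)))
                 * w j l k (snd (snd t)) \<partial>P) \<noteq> 0"
  shows "\<forall>c>0. (\<lambda>n. measure M {\<omega>\<in>space M.
            c \<le> Sstat n w K (\<lambda>j. F n j (aux n \<omega>)) (\<lambda>l. G n l (aux n \<omega>)) (\<lambda>i. D n i \<omega>)})
          \<longlonglongrightarrow> 1"
proof -
  interpret cor3 M P D Aux aux F G f u g v w K C
    by (rule cor3.intro; fact)
  show ?thesis by (rule main)
qed

end
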